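(* In the Setting, under (SA1)–(SA3), let $\mathcal I\in\mathfrak G$, distinct $i,j\in\mathcal I$ and pairwise distinct $\alpha_1,\alpha_2,\alpha_3\in\mathcal I^{\mathtt C}$. If $Y^{ij}_{\alpha_1\alpha_2}$ and $Y^{ij}_{\alpha_1\alpha_3}$ (basis $\mathcal I$) are radical while $Y^{ij}_{\alpha_2\alpha_3}\in\mathbb F$, then $Y^{ij}_{\alpha_2\alpha_3}\in\mathbb C$, and for both $w\in\{2,3\}$ the triple $\big(h(\mathcal I)h(\mathcal I^{ij}_{\alpha_1\alpha_w}),\,h(\mathcal I^i_{\alpha_1})h(\mathcal I^j_{\alpha_w}),\,h(\mathcal I^i_{\alpha_w})h(\mathcal I^j_{\alpha_1})\big)$ contains two entries in different positions that are proportional over $\mathbb C$ but not equal.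
   Context: Setting. $d\ge1$, $1\le k\le n$; $\mathbf t=(t_1,\dots,t_d)$ indeterminates; $\Lambda:=\mathbb C[t_1^{\pm1},\dots,t_d^{\pm1}]$ (a UFD whose units are exactly the elements $c\,\mathbf t^{\mathbf e}$, $c\in\mathbb C\setminus\{0\}$, $\mathbf e\in\mathbb Z^d$), $\mathbb F$ its fraction field, $\overline{\mathbb F}$ an algebraic closure. $[n]=\{1,\dots,n\}$, $\wp_k[n]$ the $k$-subsets. For $\mathcal I\in\wp_k[n]$: $\mathcal I^{\mathtt C}=[n]\setminus\mathcal I$; $\mathcal I^i_\alpha=(\mathcal I\setminus\{i\})\cup\{\alpha\}$; $\mathcal I^{ij}_{\alpha\beta}=(\mathcal I\setminus\{i,j\})\cup\{\alpha,\beta\}$. $\mathbf L$ ($k\times n$), $\mathbf R$ ($n\times k$) with entries in $\overline{\mathbb F}$; $\Delta_{\mathbf L}(\mathcal I)$, $\Delta_{\mathbf R}(\mathcal I)$ maximal minors on columns, resp. rows, $\mathcal I$; $h(\mathcal I):=\Delta_{\mathbf L}(\mathcal I)\Delta_{\mathbf R}(\mathcal I)$; $\mathfrak G:=\{\mathcal I:\Delta_{\mathbf L}(\mathcal I)\ne0\}$. (SA1) all $\Delta_{\mathbf R}(\mathcal I)\ne0$; (SA2) $h(\mathcal I)$ is a unit of $\Lambda$ for $\mathcal I\in\mathfrak G$; (SA3) $\mathbf L$ has no zero column. $Y^{ij}_{\alpha\beta}=Y(\mathcal I)^{ij}_{\alpha\beta}:=-\mathrm{sign}[(i-\alpha)(i-\beta)(j-\alpha)(j-\beta)]\frac{\Delta_{\mathbf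 R}(\mathcal I^i_\alpha)\Delta_{\mathbf R}(\mathcal I^j_\beta)}{\Delta_{\mathbf R}(\mathcal I^i_\beta)\Delta_{\mathbf R}(\mathcal I^j_\alpha)}$; it is radical if $h(\mathcal I)h(\mathcal I^{ij}_{\alpha\beta}),h(\mathcal I^i_\alpha)h(\mathcal I^j_\beta),h(\mathcal I^i_\beta)h(\mathcal I^j_\alpha)$ are all nonzero and $Y^{ij}_{\alpha\beta}\notin\mathbb F$. *)

theory Defs
  imports "HOL-Library.Poly_Mapping"
          "HOL-Computational_Algebra.Fraction_Field"
          "HOL-Algebra.Algebraic_Closure_Type"
          "Jordan_Normal_Form.Determinant"
          "Jordan_Normal_Form.DL_Submatrix"
begin

text \<open>Laurent polynomial ring Lambda = C[t_1^{+-1},...,t_d^{+-1}] realised as the group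
  algebra of Z^d: finitely supported maps from exponent vectors ('d =>0 int) to complex,
  with convolution product. The number of variables is d = CARD('d).\<close>
type_synonym 'd laurent = "('d \<Rightarrow>\<^sub>0 int) \<Rightarrow>\<^sub>0 complex"

type_synonym 'd fbar = "'d laurent fract alg_closure"

definition embF :: "'d::{finite,linorder} laurent fract \<Rightarrow> 'd fbar" where
  "embF x = to_ac x"

definition embL :: "'d::{finite,linorder} laurent \<Rightarrow> 'd fbar" where
  "embL u = embF (Fract u 1)"

definition embC :: "complex \<Rightarrow> 'd::{finite,linorder} fbar" where
  "embC c = embL (Poly_Mapping.single 0 c)"

definition inF :: "'d::{finite,linorder} fbar \<Rightarrow> bool" where
  "inF x \<longleftrightarrow> x \<in> range embF"

definition inC :: "'d::{finite,linorder} fbar \<Rightarrow> bool" where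
  "inC x \<longleftrightarrow> x \<in> range (embC :: complex \<Rightarrow> 'd fbar)"

definition is_Lunit :: "'d::{finite,linorder} fbar \<Rightarrow> bool" where
  "is_Lunit x \<longleftrightarrow> (\<exists>u :: 'd laurent. u dvd 1 \<and> x = embL u)"

text \<open>k-subsets of [n]; [n] is represented 0-based as {0..<n}.\<close>
definition ksubsets :: "nat \<Rightarrow> nat \<Rightarrow> nat set set" where
  "ksubsets k n = {I. I \<subseteq> {0..<n} \<and> card I = k}"

text \<open>Maximal minors: columns (resp. rows) I, taken in increasing order.\<close>
definition DeltaL :: "'a::comm_ring_1 mat \<Rightarrow> nat set \<Rightarrow> 'a" where
  "DeltaL L I = det (submatrix L UNIV I)"

definition DeltaR :: "'a::comm_ring_1 mat \<Rightarrow> nat set \<Rightarrow> 'a" where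
  "DeltaR R I = det (submatrix R I UNIV)"

definition hfun :: "'a::comm_ring_1 mat \<Rightarrow> 'a mat \<Rightarrow> nat set \<Rightarrow> 'a" where
  "hfun L R I = DeltaL L I * DeltaR R I"

definition swap1 :: "nat set \<Rightarrow> nat \<Rightarrow> nat \<Rightarrow> nat set" where
  "swap1 I i a = insert a (I - {i})"

definition swap2 :: "nat set \<Rightarrow> nat \<Rightarrow> nat \<Rightarrow> nat \<Rightarrow> nat \<Rightarrow> nat set" where
  "swap2 I i j a b = insert a (insert b (I - {i, j}))"

definition Yval :: "'a::field mat \<Rightarrow> nat set \<Rightarrow> nat \<Rightarrow> nat \<Rightarrow> nat \<Rightarrow> nat \<Rightarrow> 'a" where
  "Yval R I i j a b =
     - of_int (sgn ((int i - int a) * (int i - int b) * (int j - int a) * (int j - int b)))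
     * (DeltaR R (swap1 I i a) * DeltaR R (swap1 I j b))
       / (DeltaR R (swap1 I i b) * DeltaR R (swap1 I j a))"

definition radical :: "'d::{finite,linorder} fbar mat \<Rightarrow> 'd fbar mat \<Rightarrow> nat set
    \<Rightarrow> nat \<Rightarrow> nat \<Rightarrow> nat \<Rightarrow> nat \<Rightarrow> bool" where
  "radical L R I i j a b \<longleftrightarrow>
     hfun L R I * hfun L R (swap2 I i j a b) \<noteq> 0 \<and>
     hfun L R (swap1 I i a) * hfun L R (swap1 I j b) \<noteq> 0 \<and>
     hfun L R (swap1 I i b) * hfun L R (swap1 I j a) \<noteq> 0 \<and>
     \<not> inF (Yval R I i j a b)"

definition htriple :: "'a::comm_ring_1 mat \<Rightarrow> 'a mat \<Rightarrow> nat set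
    \<Rightarrow> nat \<Rightarrow> nat \<Rightarrow> nat \<Rightarrow> nat \<Rightarrow> 'a list" where
  "htriple L R I i j a b =
     [hfun L R I * hfun L R (swap2 I i j a b),
      hfun L R (swap1 I i a) * hfun L R (swap1 I j b),
      hfun L R (swap1 I i b) * hfun L R (swap1 I j a)]"

definition propC :: "'d::{finite,linorder} fbar \<Rightarrow> 'd fbar \<Rightarrow> bool" where
  "propC x y \<longleftrightarrow> (\<exists>c::complex. c \<noteq> 0 \<and> x = embC c * y)"

end

theory Submission
  imports Defs
begin


definition Dl :: "nat \<Rightarrow> 'a::comm_ring_1 mat \<Rightarrow> nat list \<Rightarrow> 'a" where
  "Dl k M xs = det (mat k k (\<lambda>(p,q). M $$ (xs ! p, q)))"

lemma pick_sorted: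
  assumes fin: "finite A" and p: "p < card A"
  shows "pick A p = sorted_list_of_set A ! p"
proof -
  define xs where "xs = sorted_list_of_set A"
  have len: "length xs = card A" unfolding xs_def by simp
  have ss: "sorted_wrt (<) xs" unfolding xs_def by (rule strict_sorted_list_of_set)
  have dist: "distinct xs" unfolding xs_def by simp
  have setx: "set xs = A" unfolding xs_def using fin by simp
  have mem: "xs ! p \<in> A" using p len setx nth_mem by metis
  have eq: "{a \<in> A. a < xs ! p} = (\<lambda>q. xs ! q) ` {..<p}"
  proof
    show "{a \<in> A. a < xs ! p} \<subseteq> (\<lambda>q. xs ! q) ` {..<p}"
    proof
      fix a assume a: "a \<in> {a \<in> A. a < xs ! p}"
      then obtain q where q: "q < length xs" "a = xs ! q" using setx by (auto simp: in_set_conv_nth)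
      have "q < p"
      proof (rule ccontr)
        assume "\<not> q < p"
        then have "p < q \<or> p = q" by auto
        then have "xs ! p \<le> xs ! q"
          using sorted_wrt_nth_less[OF ss, of p q] q by auto
        then show False using a q by auto
      qed
      then show "a \<in> (\<lambda>q. xs ! q) ` {..<p}" using q by auto
    qed
    show "(\<lambda>q. xs ! q) ` {..<p} \<subseteq> {a \<in> A. a < xs ! p}"
    proof
      fix a assume "a \<in> (\<lambda>q. xs ! q) ` {..<p}"
      then obtain q where q: "q < p" "a = xs ! q" by auto
      have "xs ! q < xs ! p" using sorted_wrt_nth_less[OF ss q(1)] p len by simp
      moreover have "xs ! q \<in> A" using q p len setx nth_mem by (metis order.strict_trans)
      ultimately show "a \<in> {a \<in> A. a < xs ! p}" using q by simp
    qed
  qed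
  have inj: "inj_on (\<lambda>q. xs ! q) {..<p}"
    using dist p len by (auto simp: inj_on_def nth_eq_iff_index_eq)
  have "card {a \<in> A. a < xs ! p} = p" unfolding eq using card_image[OF inj] by simp
  then show ?thesis using pick_card_in_set[OF mem] unfolding xs_def by simp
qed

lemma DeltaR_Dl:
  assumes M: "M \<in> carrier_mat n k" and A: "A \<subseteq> {0..<n}" "card A = k"
  shows "DeltaR M A = Dl k M (sorted_list_of_set A)"
proof -
  have fin: "finite A" using A finite_subset by auto
  have c1: "{i. i < dim_row M \<and> i \<in> A} = A" using M A by auto
  have c2: "{j. j < dim_col M \<and> j \<in> UNIV} = {0..<k}" using M by auto
  show ?thesis unfolding DeltaR_def Dl_def submatrix_def c1 c2
    by (rule arg_cong[where f=det], rule eq_matI) (auto simp: A pick_UNIV pick_sorted fin)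
qed

lemma Dl_swap:
  assumes "length xs = k" "p < k" "q < k" "p \<noteq> q"
  shows "Dl k M (xs[p := xs!q, q := xs!p]) = - Dl k M xs"
proof -
  let ?A = "mat k k (\<lambda>(i,j). M $$ (xs ! i, j))"
  have A: "?A \<in> carrier_mat k k" by simp
  have "swaprows p q ?A = mat k k (\<lambda>(i,j). M $$ (xs[p := xs!q, q := xs!p] ! i, j))"
    by (rule eq_matI) (use assms in \<open>auto simp: nth_list_update\<close>)
  then show ?thesis unfolding Dl_def using det_swaprows[OF assms(2,3,4) A] by simp
qed

lemma Dl_adj:
  assumes "length pre + length post + 2 = k"
  shows "Dl k M (pre @ u # v # post) = - Dl k M (pre @ v # u # post)"
proof -
  let ?xs = "pre @ v # u # post"
  have "?xs[length pre := ?xs ! Suc (length pre), Suc (length pre) := ?xs ! length pre] = pre @ u # v # post"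
    by (simp add: list_update_append nth_append)
  then show ?thesis using Dl_swap[of ?xs k "length pre" "Suc (length pre)" M] assms by simp
qed

lemma insort_snoc_le: "(y::'a::linorder) \<le> a \<Longrightarrow> insort y (xs @ [a]) = insort y xs @ [a]"
  by (induction xs) auto

lemma insort_all_less: "\<forall>z\<in>set xs. z < (y::'a::linorder) \<Longrightarrow> insort y xs = xs @ [y]"
  by (induction xs) auto

lemma Dl_insort:
  fixes y :: nat
  assumes "sorted xs" "distinct xs" "y \<notin> set xs" "length pre + length xs + length post + 1 = k"
  shows "Dl k M (pre @ insort y xs @ post) =
     (-1)^(card {s \<in> set xs. y < s}) * Dl k M (pre @ xs @ y # post)"
  using assms
proof (induction xs arbitrary: post rule: rev_induct)
  case Nil then show ?case by simp
next
  case (snoc a xs)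
  have sxs: "sorted xs" "\<forall>z\<in>set xs. z \<le> a" using snoc.prems(1) by (simp_all add: sorted_append)
  have dxs: "distinct xs" "a \<notin> set xs" using snoc.prems(2) by auto
  have ya: "y \<noteq> a" "y \<notin> set xs" using snoc.prems(3) by auto
  show ?case
  proof (cases "a < y")
    case True
    then have all: "\<forall>z\<in>set (xs@[a]). z < y" using sxs by auto
    then have c: "{s \<in> set (xs@[a]). y < s} = {}" by auto
    have eq: "pre @ insort y (xs@[a]) @ post = pre @ (xs@[a]) @ y # post"
      using insort_all_less[OF all] by simp
    show ?thesis by (simp only: eq c card.empty power_0 mult_1_left)
  next
    case False
    then have ylta: "y < a" using ya by simp
    have ins: "insort y (xs @ [a]) = insort y xs @ [a]" by (rule insort_snoc_le) (use ylta in simp)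
    have IH: "Dl k M (pre @ insort y xs @ (a # post)) =
        (-1)^(card {s\<in>set xs. y<s}) * Dl k M (pre @ xs @ y # a # post)"
      by (rule snoc.IH) (use sxs dxs ya snoc.prems(4) in auto)
    have sw: "Dl k M ((pre @ xs) @ y # a # post) = - Dl k M ((pre @ xs) @ a # y # post)"
      by (rule Dl_adj) (use snoc.prems(4) in simp)
    have "{s \<in> set (xs@[a]). y < s} = insert a {s\<in>set xs. y<s}" using ylta by auto
    then have cnt: "card {s \<in> set (xs@[a]). y < s} = Suc (card {s\<in>set xs. y<s})"
      using dxs by simp
    show ?thesis using ins IH sw cnt by simp
  qed
qed

definition tS :: "nat set \<Rightarrow> nat \<Rightarrow> 'a::comm_ring_1" where
  "tS S x = (-1)^(card {s\<in>S. x < s})"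

definition osg :: "nat \<Rightarrow> nat \<Rightarrow> 'a::comm_ring_1" where
  "osg x y = (if x < y then 1 else -1)"

lemma Dl_pair:
  assumes fin: "finite S" and xy: "x \<noteq> y" "x \<notin> S" "y \<notin> S" and k: "card S + 2 = k"
  shows "Dl k M (sorted_list_of_set (insert x (insert y S))) =
     tS S x * tS S y * osg x y * Dl k M (sorted_list_of_set S @ [x, y])"
proof -
  define Sl where "Sl = sorted_list_of_set S"
  have Sl: "sorted Sl" "distinct Sl" "set Sl = S" "length Sl = card S" unfolding Sl_def using fin by auto
  have e1: "sorted_list_of_set (insert x (insert y S)) = insort x (insort y Sl)"
    unfolding Sl_def using fin xy by (simp add: sorted_list_of_set_insert)
  have st1: "Dl k M ([] @ insort x (insort y Sl) @ []) =
      (-1)^(card {s \<in> set (insort y Sl). x < s}) * Dl k M ([] @ insort y Sl @ [x])"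
    by (rule Dl_insort) (use Sl xy k in \<open>auto simp: sorted_insort distinct_insort set_insort_key\<close>)
  have st2: "Dl k M ([] @ insort y Sl @ [x]) =
      (-1)^(card {s \<in> set Sl. y < s}) * Dl k M ([] @ Sl @ y # [x])"
    by (rule Dl_insort) (use Sl xy k in auto)
  have st3: "Dl k M (Sl @ [y, x]) = - Dl k M (Sl @ [x, y])"
    using Dl_adj[of Sl "[]" k M y x] Sl k by simp
  have cset: "{s \<in> set (insort y Sl). x < s} = (if x < y then insert y {s\<in>S. x < s} else {s\<in>S. x < s})"
    using Sl by (auto simp: set_insort_key)
  have cnt: "card {s \<in> set (insort y Sl). x < s} = card {s\<in>S. x < s} + (if x < y then 1 else 0)"
    unfolding cset using fin xy by auto
  show ?thesis
    unfolding e1 using st1 st2 st3 cnt Sl(3)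
    by (auto simp: tS_def osg_def Sl_def power_add)
qed


definition phi :: "nat \<Rightarrow> (nat \<Rightarrow> nat \<Rightarrow> 'a::comm_ring_1) \<Rightarrow> (nat \<Rightarrow> 'a) \<Rightarrow> (nat \<Rightarrow> 'a) \<Rightarrow> 'a" where
  "phi m G u v = det (mat (m+2) (m+2) (\<lambda>(p,q). if p < m then G p q else if p = m then u q else v q))"

lemma phi_cong:
  assumes "\<forall>q<m+2. u q = u' q" "\<forall>q<m+2. v q = v' q"
  shows "phi m G u v = phi m G u' v'"
  unfolding phi_def by (rule arg_cong[where f=det], rule eq_matI) (use assms in auto)

lemma phi_anti: "phi m G v u = - phi m G u v"
proof -
  let ?A = "mat (m+2) (m+2) (\<lambda>(p,q). if p < m then G p q else if p = m then u q else v q)"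
  have A: "?A \<in> carrier_mat (m+2) (m+2)" by simp
  have "swaprows m (m+1) ?A = mat (m+2) (m+2) (\<lambda>(p,q). if p < m then G p q else if p = m then v q else u q)"
    by (rule eq_matI) auto
  then show ?thesis unfolding phi_def using det_swaprows[of m "m+2" "m+1" ?A] A by simp
qed

lemma phi_same: "phi m G u u = 0"
proof -
  let ?A = "mat (m+2) (m+2) (\<lambda>(p,q). if p < m then G p q else if p = m then u q else u q)"
  have A: "?A \<in> carrier_mat (m+2) (m+2)" by simp
  have r: "row ?A m = row ?A (m+1)" by (rule eq_vecI) auto
  show ?thesis unfolding phi_def by (rule det_identical_rows[OF A _ _ _ r]) auto
qed

lemma phi_G: assumes "p < m" shows "phi m G (G p) v = 0"
proof -
  let ?A = "mat (m+2) (m+2) (\<lambda>(p',q). if p' < m then G p' q else if p' = m then G p q else v q)"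
  have A: "?A \<in> carrier_mat (m+2) (m+2)" by simp
  have r: "row ?A p = row ?A m" by (rule eq_vecI) (use assms in auto)
  show ?thesis unfolding phi_def by (rule det_identical_rows[OF A _ _ _ r]) (use assms in auto)
qed

lemma det_row_lin:
  fixes c :: "'i \<Rightarrow> 'a::comm_ring_1"
  assumes r: "r < n" and P: "finite P"
  shows "det (mat n n (\<lambda>(i,j). if i = r then (\<Sum>p\<in>P. c p * w p j) else B i j))
       = (\<Sum>p\<in>P. c p * det (mat n n (\<lambda>(i,j). if i = r then w p j else B i j)))"
proof -
  let ?U = "{0..<n}"
  let ?rest = "\<lambda>\<pi>. \<Prod>i\<in>?U - {r}. B i (\<pi> i)"
  have rest: "(\<Prod>i\<in>?U. if i = r then f (\<pi> i) else B i (\<pi> i)) = f (\<pi> r) * ?rest \<pi>"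
    for \<pi> f
  proof -
    have "(\<Prod>i\<in>?U. if i = r then f (\<pi> i) else B i (\<pi> i))
        = (\<Prod>i\<in>?U. if i = r then f (\<pi> r) else B i (\<pi> i))"
      by (rule prod.cong) auto
    also have "\<dots> = (if r = r then f (\<pi> r) else B r (\<pi> r)) * (\<Prod>i\<in>?U-{r}. if i = r then f (\<pi> r) else B i (\<pi> i))"
      by (rule prod.remove) (use r in auto)
    also have "(\<Prod>i\<in>?U-{r}. if i = r then f (\<pi> r) else B i (\<pi> i)) = ?rest \<pi>"
      by (rule prod.cong) auto
    finally show ?thesis by simp
  qed
  have "det (mat n n (\<lambda>(i,j). if i = r then (\<Sum>p\<in>P. c p * w p j) else B i j))
      = (\<Sum>\<pi>\<in>{\<pi>. \<pi> permutes ?U}. signof \<pi> * ((\<Sum>p\<in>P. c p * w p (\<pi> r)) * ?rest \<pi>))"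
  proof (unfold det_def'[OF mat_carrier], rule sum.cong[OF refl])
    fix \<pi> assume "\<pi> \<in> {\<pi>. \<pi> permutes ?U}"
    then have \<pi>: "\<pi> permutes ?U" by simp
    have "(\<Prod>i\<in>?U. (mat n n (\<lambda>(i,j). if i = r then (\<Sum>p\<in>P. c p * w p j) else B i j)) $$ (i, \<pi> i))
      = (\<Prod>i\<in>?U. if i = r then (\<lambda>j. \<Sum>p\<in>P. c p * w p j) (\<pi> i) else B i (\<pi> i))"
      by (rule prod.cong) (use permutes_in_image[OF \<pi>] in auto)
    also have "\<dots> = (\<Sum>p\<in>P. c p * w p (\<pi> r)) * ?rest \<pi>" by (rule rest)
    finally show "signof \<pi> * (\<Prod>i\<in>?U. (mat n n (\<lambda>(i,j). if i = r then (\<Sum>p\<in>P. c p * w p j) else B i j)) $$ (i, \<pi> i))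
      = signof \<pi> * ((\<Sum>p\<in>P. c p * w p (\<pi> r)) * ?rest \<pi>)" by simp
  qed
  also have "\<dots> = (\<Sum>\<pi>\<in>{\<pi>. \<pi> permutes ?U}. \<Sum>p\<in>P. c p * (signof \<pi> * (w p (\<pi> r) * ?rest \<pi>)))"
    by (rule sum.cong) (auto simp: sum_distrib_left sum_distrib_right mult_ac)
  also have "\<dots> = (\<Sum>p\<in>P. \<Sum>\<pi>\<in>{\<pi>. \<pi> permutes ?U}. c p * (signof \<pi> * (w p (\<pi> r) * ?rest \<pi>)))"
    by (rule sum.swap)
  also have "\<dots> = (\<Sum>p\<in>P. c p * det (mat n n (\<lambda>(i,j). if i = r then w p j else B i j)))"
  proof (rule sum.cong[OF refl])
    fix p assume "p \<in> P"
    have "det (mat n n (\<lambda>(i,j). if i = r then w p j else B i j))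
      = (\<Sum>\<pi>\<in>{\<pi>. \<pi> permutes ?U}. signof \<pi> * (w p (\<pi> r) * ?rest \<pi>))"
    proof (unfold det_def'[OF mat_carrier], rule sum.cong[OF refl])
      fix \<pi> assume "\<pi> \<in> {\<pi>. \<pi> permutes ?U}"
      then have \<pi>: "\<pi> permutes ?U" by simp
      have "(\<Prod>i\<in>?U. (mat n n (\<lambda>(i,j). if i = r then w p j else B i j)) $$ (i, \<pi> i))
        = (\<Prod>i\<in>?U. if i = r then (w p) (\<pi> i) else B i (\<pi> i))"
        by (rule prod.cong) (use permutes_in_image[OF \<pi>] in auto)
      also have "\<dots> = w p (\<pi> r) * ?rest \<pi>" by (rule rest)
      finally show "signof \<pi> * (\<Prod>i\<in>?U. (mat n n (\<lambda>(i,j). if i = r then w p j else B i j)) $$ (i, \<pi> i))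
        = signof \<pi> * (w p (\<pi> r) * ?rest \<pi>)" by simp
    qed
    then show "(\<Sum>\<pi>\<in>{\<pi>. \<pi> permutes ?U}. c p * (signof \<pi> * (w p (\<pi> r) * ?rest \<pi>)))
      = c p * det (mat n n (\<lambda>(i,j). if i = r then w p j else B i j))"
      by (simp add: sum_distrib_left)
  qed
  finally show ?thesis .
qed

lemma phi_lin:
  fixes G :: "nat \<Rightarrow> nat \<Rightarrow> 'a::comm_ring_1"
  assumes "finite P"
  shows "phi m G (\<lambda>q. \<Sum>p\<in>P. c p * w p q) v = (\<Sum>p\<in>P. c p * phi m G (w p) v)"
proof -
  have eqm: "(\<lambda>(p,q). if p < m then G p q else if p = m then U q else v q) =
      (\<lambda>(i,j). if i = m then U j else (if i < m then G i j else v j))" for U :: "nat \<Rightarrow> 'a"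
    by (auto simp: fun_eq_iff)
  show ?thesis unfolding phi_def eqm
    by (rule det_row_lin) (use assms in auto)
qed

definition Nf :: "nat \<Rightarrow> (nat \<Rightarrow> nat \<Rightarrow> 'a) \<Rightarrow> (nat \<Rightarrow> 'a) \<Rightarrow> (nat \<Rightarrow> 'a) \<Rightarrow> nat \<Rightarrow> nat \<Rightarrow> 'a" where
  "Nf m G u v p = (if p < m then G p else if p = m then u else v)"

lemma phi_span:
  fixes G :: "nat \<Rightarrow> nat \<Rightarrow> 'a::field"
  assumes nz: "phi m G u v \<noteq> 0"
  shows "\<exists>c. \<forall>q<m+2. w q = (\<Sum>p<m+2. c p * Nf m G u v p q)"
proof -
  let ?n = "m+2"
  define N where "N = mat ?n ?n (\<lambda>(p,q). Nf m G u v p q)"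
  have N: "N \<in> carrier_mat ?n ?n" unfolding N_def by simp
  have dN: "det N = phi m G u v" unfolding N_def phi_def
    by (rule arg_cong[where f=det], rule eq_matI) (auto simp: Nf_def)
  define T where "T = transpose_mat N"
  have T: "T \<in> carrier_mat ?n ?n" unfolding T_def using N by simp
  have dT: "det T \<noteq> 0" unfolding T_def using det_transpose[OF N] dN nz by simp
  from det_non_zero_imp_unit[OF T dT, of "()"]
  obtain B where B: "B \<in> carrier_mat ?n ?n" "T * B = 1\<^sub>m ?n"
    unfolding Units_def ring_mat_def by auto
  define wv where "wv = vec ?n w"
  define cv where "cv = B *\<^sub>v wv"
  have wv: "wv \<in> carrier_vec ?n" unfolding wv_def by simp
  have "T *\<^sub>v cv = (T * B) *\<^sub>v wv" unfolding cv_def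
    by (rule assoc_mult_mat_vec[symmetric]) (use T B wv in auto)
  also have "\<dots> = wv" using B wv by simp
  finally have Tc: "T *\<^sub>v cv = wv" .
  have cv: "cv \<in> carrier_vec ?n" unfolding cv_def using B wv by simp
  show ?thesis
  proof (intro exI allI impI)
    fix q assume q: "q < ?n"
    have "w q = wv $ q" unfolding wv_def using q by simp
    also have "\<dots> = (T *\<^sub>v cv) $ q" using Tc by simp
    also have "\<dots> = row T q \<bullet> cv" using q T by simp
    also have "\<dots> = (\<Sum>p\<in>{0..<?n}. row T q $ p * cv $ p)" unfolding scalar_prod_def using cv by simp
    also have "\<dots> = (\<Sum>p<?n. cv $ p * Nf m G u v p q)"
      by (rule sum.cong) (use q T N in \<open>auto simp: T_def N_def mult.commute\<close>)
    finally show "w q = (\<Sum>p<?n. (\<lambda>p. cv $ p) p * Nf m G u v p q)" by simp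
  qed
qed

lemma phi_E:
  fixes G :: "nat \<Rightarrow> nat \<Rightarrow> 'a::comm_ring_1"
  shows "phi m G (\<lambda>q. \<Sum>p<m+2. c p * Nf m G u v p q) y = c m * phi m G u y + c (m+1) * phi m G v y"
proof -
  have L: "phi m G (\<lambda>q. \<Sum>p<m+2. c p * Nf m G u v p q) y = (\<Sum>p<m+2. c p * phi m G (Nf m G u v p) y)"
    by (rule phi_lin) simp
  have st: "{..<m+2} = insert (m+1) (insert m {..<m})" by auto
  have s1: "(\<Sum>p<m+2. c p * phi m G (Nf m G u v p) y)
      = c (m+1) * phi m G (Nf m G u v (m+1)) y + (c m * phi m G (Nf m G u v m) y
        + (\<Sum>p<m. c p * phi m G (Nf m G u v p) y))"
    unfolding st by simp
  have s2: "(\<Sum>p<m. c p * phi m G (Nf m G u v p) y) = 0"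
    by (rule sum.neutral) (auto simp: Nf_def phi_G)
  show ?thesis unfolding L s1 s2 by (simp add: Nf_def)
qed

lemma phi_pl1:
  fixes G :: "nat \<Rightarrow> nat \<Rightarrow> 'a::field"
  assumes nz: "phi m G u v \<noteq> 0"
  shows "phi m G u v * phi m G w z - phi m G u w * phi m G v z + phi m G u z * phi m G v w = 0"
proof -
  obtain c where c: "\<forall>q<m+2. w q = (\<Sum>p<m+2. c p * Nf m G u v p q)" using phi_span[OF nz] by blast
  obtain d where d: "\<forall>q<m+2. z q = (\<Sum>p<m+2. d p * Nf m G u v p q)" using phi_span[OF nz] by blast
  have hw: "phi m G w y = c m * phi m G u y + c (m+1) * phi m G v y" for y
  proof -
    have "phi m G w y = phi m G (\<lambda>q. \<Sum>p<m+2. c p * Nf m G u v p q) y"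
      by (rule phi_cong) (use c in auto)
    then show ?thesis using phi_E by simp
  qed
  have hz: "phi m G z y = d m * phi m G u y + d (m+1) * phi m G v y" for y
  proof -
    have "phi m G z y = phi m G (\<lambda>q. \<Sum>p<m+2. d p * Nf m G u v p q) y"
      by (rule phi_cong) (use d in auto)
    then show ?thesis using phi_E by simp
  qed
  have uu: "phi m G u u = 0" and vv: "phi m G v v = 0" by (rule phi_same)+
  have vu: "phi m G v u = - phi m G u v" by (rule phi_anti)
  have A1: "phi m G w z = c m * phi m G u z + c (m+1) * phi m G v z" by (rule hw)
  have A2: "phi m G u z = d (m+1) * phi m G u v"
    using phi_anti[of m G u z] hz[of u] uu vu by simp
  have A3: "phi m G v z = - (d m * phi m G u v)"
    using phi_anti[of m G v z] hz[of v] vv by simp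
  have A4: "phi m G u w = c (m+1) * phi m G u v"
    using phi_anti[of m G u w] hw[of u] uu vu by simp
  have A5: "phi m G v w = - (c m * phi m G u v)"
    using phi_anti[of m G v w] hw[of v] vv by simp
  show ?thesis unfolding A1 A2 A3 A4 A5 by (simp add: algebra_simps)
qed

lemma phi_pl:
  fixes G :: "nat \<Rightarrow> nat \<Rightarrow> 'a::field"
  shows "phi m G u v * phi m G w z - phi m G u w * phi m G v z + phi m G u z * phi m G v w = 0"
proof -
  let ?p = "phi m G"
  have an: "?p x y = - ?p y x" for x y by (rule phi_anti)
  consider "?p u v \<noteq> 0" | "?p u w \<noteq> 0" | "?p u z \<noteq> 0" | "?p v w \<noteq> 0" | "?p v z \<noteq> 0" | "?p w z \<noteq> 0"
    | "?p u v = 0" "?p u w = 0" "?p u z = 0" "?p v w = 0" "?p v z = 0" "?p w z = 0" by blast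
  then show ?thesis
  proof cases
    case 1 then show ?thesis by (rule phi_pl1)
  next
    case 2
    have P: "?p u w * ?p v z - ?p u v * ?p w z + ?p u z * ?p w v = 0" by (rule phi_pl1[OF 2])
    have "?p w v = - ?p v w" by (rule an)
    then show ?thesis using P by (simp add: algebra_simps)
  next
    case 3
    have P: "?p u z * ?p v w - ?p u v * ?p z w + ?p u w * ?p z v = 0" by (rule phi_pl1[OF 3])
    have "?p z w = - ?p w z" "?p z v = - ?p v z" by (rule an)+
    then show ?thesis using P by (simp add: algebra_simps)
  next
    case 4
    have P: "?p v w * ?p u z - ?p v u * ?p w z + ?p v z * ?p w u = 0" by (rule phi_pl1[OF 4])
    have "?p v u = - ?p u v" "?p w u = - ?p u w" by (rule an)+
    then show ?thesis using P by (simp add: algebra_simps)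
  next
    case 5
    have P: "?p v z * ?p u w - ?p v u * ?p z w + ?p v w * ?p z u = 0" by (rule phi_pl1[OF 5])
    have "?p v u = - ?p u v" "?p z w = - ?p w z" "?p z u = - ?p u z" by (rule an)+
    then show ?thesis using P by (simp add: algebra_simps)
  next
    case 6
    have P: "?p w z * ?p u v - ?p w u * ?p z v + ?p w v * ?p z u = 0" by (rule phi_pl1[OF 6])
    have "?p w u = - ?p u w" "?p z v = - ?p v z" "?p w v = - ?p v w" "?p z u = - ?p u z" by (rule an)+
    then show ?thesis using P by (simp add: algebra_simps)
  next
    case 7 then show ?thesis by simp
  qed
qed


lemma osg_sq: "osg x y * osg x y = (1::'a::comm_ring_1)" by (simp add: osg_def)

lemma tS_sq: "tS S x * tS S x = (1::'a::comm_ring_1)"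
  by (simp add: tS_def power_mult_distrib[symmetric])

lemma Dl_phi:
  assumes "length Sl = m"
  shows "Dl (m+2) M (Sl @ [x,y]) = phi m (\<lambda>p q. M $$ (Sl!p, q)) (\<lambda>q. M$$(x,q)) (\<lambda>q. M$$(y,q))"
  unfolding Dl_def phi_def by (rule arg_cong[where f=det], rule eq_matI) (auto simp: nth_append assms)

lemma DR_pair:
  fixes M :: "'a::comm_ring_1 mat"
  assumes M: "M \<in> carrier_mat n k" and S: "S \<subseteq> {0..<n}" "card S + 2 = k"
   and xy: "x \<noteq> y" "x \<notin> S" "y \<notin> S" "x < n" "y < n"
  shows "DeltaR M (insert x (insert y S)) = tS S x * tS S y * osg x y *
    phi (card S) (\<lambda>p q. M $$ (sorted_list_of_set S ! p, q)) (\<lambda>q. M$$(x,q)) (\<lambda>q. M$$(y,q))"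
proof -
  have fin: "finite S" using S finite_subset by blast
  have c: "card (insert x (insert y S)) = k" using fin xy S by simp
  have sub: "insert x (insert y S) \<subseteq> {0..<n}" using S xy by auto
  have "DeltaR M (insert x (insert y S)) = Dl k M (sorted_list_of_set (insert x (insert y S)))"
    by (rule DeltaR_Dl[OF M sub c])
  also have "\<dots> = tS S x * tS S y * osg x y * Dl k M (sorted_list_of_set S @ [x, y])"
    by (rule Dl_pair) (use fin xy S in auto)
  also have "Dl k M (sorted_list_of_set S @ [x, y]) =
      phi (card S) (\<lambda>p q. M $$ (sorted_list_of_set S ! p, q)) (\<lambda>q. M$$(x,q)) (\<lambda>q. M$$(y,q))"
    using Dl_phi[of "sorted_list_of_set S" "card S" M x y] S fin by simp
  finally show ?thesis .
qed

lemma pl_alg: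
  fixes oij oab oai obj obi oaj ti tj ta tb pij pab pia pjb pib pja rI rT rQa rPb rQb rPa :: "'a::comm_ring_1"
  assumes sq: "oij*oij = 1" "oab*oab = 1" "obi*obi = 1" "oaj*oaj = 1"
   and pl: "pij*pab - pia*pjb + pib*pja = 0"
   and r: "rI = ti*tj*oij*pij" "rT = ta*tb*oab*pab" "rQa = ta*ti*oai*(-pia)" "rPb = tb*tj*obj*(-pjb)"
     "rQb = tb*ti*obi*(-pib)" "rPa = ta*tj*oaj*(-pja)"
  shows "oij*oab*oai*obj*rI*rT = rQa*rPb - oai*obj*obi*oaj*rQb*rPa"
proof -
  have pl': "pij*pab = pia*pjb - pib*pja" using pl by (simp add: algebra_simps)
  have "oij*oab*oai*obj*rI*rT = (oij*oij)*(oab*oab)*(ti*tj*ta*tb*oai*obj)*(pij*pab)"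
    unfolding r by (simp add: mult_ac)
  also have "\<dots> = (ti*tj*ta*tb*oai*obj)*(pia*pjb - pib*pja)" unfolding sq pl' by simp
  also have "\<dots> = (ti*tj*ta*tb*oai*obj)*(pia*pjb) - (obi*obi)*(oaj*oaj)*(ti*tj*ta*tb*oai*obj)*(pib*pja)"
    unfolding sq by (simp add: algebra_simps)
  also have "\<dots> = rQa*rPb - oai*obj*obi*oaj*rQb*rPa"
    unfolding r by (simp add: mult_ac)
  finally show ?thesis .
qed

lemma sgn_osg:
  assumes "a \<noteq> i" shows "(of_int (sgn (int i - int a)) :: 'a::comm_ring_1) = osg a i"
  using assms by (auto simp: osg_def sgn_if)

lemma sigma_eq:
  assumes "a \<noteq> i" "a \<noteq> j" "b \<noteq> i" "b \<noteq> j"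
  shows "(of_int (sgn ((int i - int a) * (int i - int b) * (int j - int a) * (int j - int b))) :: 'a::comm_ring_1)
    = osg a i * osg b j * osg b i * osg a j"
proof -
  have "(of_int (sgn ((int i - int a) * (int i - int b) * (int j - int a) * (int j - int b))) :: 'a)
     = of_int (sgn (int i - int a)) * of_int (sgn (int i - int b)) * of_int (sgn (int j - int a)) * of_int (sgn (int j - int b))"
    by (simp add: sgn_mult)
  also have "\<dots> = osg a i * osg b i * osg a j * osg b j"
    using assms by (simp add: sgn_osg)
  finally show ?thesis by (simp add: mult_ac)
qed

lemma plucker_sets:
  fixes M :: "'a::field mat"
  assumes M: "M \<in> carrier_mat n k" and I: "I \<subseteq> {0..<n}" "card I = k"
   and ij: "i \<in> I" "j \<in> I" "i \<noteq> j" and ab: "a \<in> {0..<n} - I" "b \<in> {0..<n} - I" "a \<noteq> b"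
  shows "(osg i j * osg a b * osg a i * osg b j) * DeltaR M I * DeltaR M (swap2 I i j a b) =
    DeltaR M (swap1 I j a) * DeltaR M (swap1 I i b) -
    of_int (sgn ((int i - int a) * (int i - int b) * (int j - int a) * (int j - int b)))
      * DeltaR M (swap1 I j b) * DeltaR M (swap1 I i a)"
proof -
  define S where "S = I - {i, j}"
  have finI: "finite I" using I finite_subset by blast
  have c2: "2 \<le> card I" using card_mono[OF finI, of "{i,j}"] ij by simp
  have S: "S \<subseteq> {0..<n}" "card S + 2 = k" unfolding S_def using I ij finI c2
    by (auto simp: card_Diff_subset)
  have iS: "i \<notin> S" "j \<notin> S" "a \<notin> S" "b \<notin> S" unfolding S_def using ab by auto
  have lt: "i < n" "j < n" "a < n" "b < n" using I ij ab by auto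
  have neq: "a \<noteq> i" "a \<noteq> j" "b \<noteq> i" "b \<noteq> j" using ab ij by auto
  define G where "G = (\<lambda>p q. M $$ (sorted_list_of_set S ! p, q))"
  define rw where "rw = (\<lambda>x q. M $$ (x, q))"
  define ph where "ph = (\<lambda>x y. phi (card S) G (rw x) (rw y))"
  have DP: "DeltaR M (insert x (insert y S)) = tS S x * tS S y * osg x y * ph x y"
    if "x \<noteq> y" "x \<notin> S" "y \<notin> S" "x < n" "y < n" for x y
    unfolding ph_def G_def rw_def by (rule DR_pair[OF M S]) (use that in auto)
  have sI: "I = insert i (insert j S)" unfolding S_def using ij by auto
  have sT: "swap2 I i j a b = insert a (insert b S)" unfolding swap2_def S_def by simp
  have sQa: "swap1 I j a = insert a (insert i S)" unfolding swap1_def S_def using ij by auto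
  have sPb: "swap1 I i b = insert b (insert j S)" unfolding swap1_def S_def using ij by auto
  have sQb: "swap1 I j b = insert b (insert i S)" unfolding swap1_def S_def using ij by auto
  have sPa: "swap1 I i a = insert a (insert j S)" unfolding swap1_def S_def using ij by auto
  have an: "ph x y = - ph y x" for x y unfolding ph_def by (rule phi_anti)
  have pl: "ph i j * ph a b - ph i a * ph j b + ph i b * ph j a = 0"
    unfolding ph_def by (rule phi_pl)
  have rI: "DeltaR M I = tS S i * tS S j * osg i j * ph i j" unfolding sI by (rule DP) (use ij iS lt in auto)
  have rT: "DeltaR M (swap2 I i j a b) = tS S a * tS S b * osg a b * ph a b" unfolding sT by (rule DP) (use ab iS lt in auto)
  have rQa: "DeltaR M (swap1 I j a) = tS S a * tS S i * osg a i * (- ph i a)"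
    unfolding sQa using DP[of a i] an[of a i] neq iS lt by simp
  have rPb: "DeltaR M (swap1 I i b) = tS S b * tS S j * osg b j * (- ph j b)"
    unfolding sPb using DP[of b j] an[of b j] neq iS lt by simp
  have rQb: "DeltaR M (swap1 I j b) = tS S b * tS S i * osg b i * (- ph i b)"
    unfolding sQb using DP[of b i] an[of b i] neq iS lt by simp
  have rPa: "DeltaR M (swap1 I i a) = tS S a * tS S j * osg a j * (- ph j a)"
    unfolding sPa using DP[of a j] an[of a j] neq iS lt by simp
  have main: "osg i j * osg a b * osg a i * osg b j * DeltaR M I * DeltaR M (swap2 I i j a b)
    = DeltaR M (swap1 I j a) * DeltaR M (swap1 I i b) - osg a i * osg b j * osg b i * osg a j
        * DeltaR M (swap1 I j b) * DeltaR M (swap1 I i a)"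
    by (rule pl_alg[OF osg_sq osg_sq osg_sq osg_sq pl rI rT rQa rPb rQb rPa])
  show ?thesis
    unfolding sigma_eq[OF neq] using main by (simp add: mult_ac)
qed

lemma E_sq: "(osg i j * osg a b * osg a i * osg b j) * (osg i j * osg a b * osg a i * osg b j) = (1::'a::comm_ring_1)"
proof -
  have "(osg i j * osg a b * osg a i * osg b j) * (osg i j * osg a b * osg a i * osg b j)
    = (osg i j * osg i j) * (osg a b * osg a b) * (osg a i * osg a i) * (osg b j * osg b j :: 'a)"
    by (simp add: mult_ac)
  then show ?thesis by (simp add: osg_sq)
qed


abbreviation lk where "lk \<equiv> Poly_Mapping.lookup"
abbreviation ks where "ks \<equiv> Poly_Mapping.keys"
abbreviation sg where "sg \<equiv> Poly_Mapping.single"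

lemma keys_minus_top:
  fixes f :: "'a \<Rightarrow>\<^sub>0 'b::ab_group_add"
  shows "ks (f - sg m (lk f m)) \<subseteq> ks f - {m}"
  by (auto simp: in_keys_iff lookup_minus lookup_single when_def split: if_splits)

lemma lookup_mult_max:
  fixes f g :: "'a::linordered_ab_group_add \<Rightarrow>\<^sub>0 'b::idom"
  assumes "\<forall>x\<in>ks f. x \<le> m" "\<forall>y\<in>ks g. y \<le> m'"
  shows "lk (f * g) (m + m') = lk f m * lk g m'"
proof -
  define f' where "f' = f - sg m (lk f m)"
  define g' where "g' = g - sg m' (lk g m')"
  define sf where "sf = sg m (lk f m)"
  define sgg where "sgg = sg m' (lk g m')"
  have kf: "\<forall>x\<in>ks f'. x < m"
  proof
    fix x assume "x \<in> ks f'"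
    then have "x \<in> ks f" "x \<noteq> m" using keys_minus_top[of f m] unfolding f'_def by blast+
    then show "x < m" using assms(1) by (simp add: order_less_le)
  qed
  have kg: "\<forall>x\<in>ks g'. x < m'"
  proof
    fix x assume "x \<in> ks g'"
    then have "x \<in> ks g" "x \<noteq> m'" using keys_minus_top[of g m'] unfolding g'_def by blast+
    then show "x < m'" using assms(2) by (simp add: order_less_le)
  qed
  have f: "f = sf + f'" and g: "g = sgg + g'"
    unfolding f'_def g'_def sf_def sgg_def by simp_all
  have z1: "lk (sf * g') (m + m') = 0"
  proof -
    have "m + m' \<notin> ks (sf * g')"
    proof
      assume "m + m' \<in> ks (sf * g')"
      then obtain x y where xy: "x \<in> ks sf" "y \<in> ks g'" "m + m' = x + y"
        using keys_mult by blast
      then have "x = m" unfolding sf_def by (simp split: if_splits)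
      then have "y = m'" using xy(3) by simp
      then show False using kg xy(2) by auto
    qed
    then show ?thesis by (simp add: in_keys_iff)
  qed
  have z2: "lk (f' * g) (m + m') = 0"
  proof -
    have "m + m' \<notin> ks (f' * g)"
    proof
      assume "m + m' \<in> ks (f' * g)"
      then obtain x y where xy: "x \<in> ks f'" "y \<in> ks g" "m + m' = x + y"
        using keys_mult by blast
      then have "x < m" "y \<le> m'" using kf assms(2) by auto
      then have "x + y < m + m'" by (rule add_less_le_mono)
      then show False using xy by simp
    qed
    then show ?thesis by (simp add: in_keys_iff)
  qed
  have "f * g = sf * sgg + sf * g' + f' * g"
    using f g by (simp add: algebra_simps)
  then have "lk (f * g) (m + m') = lk f m * lk g m'"
    using z1 z2 by (simp add: lookup_add mult_single sf_def sgg_def)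
  then show ?thesis by simp
qed

lemma lookup_mult_min:
  fixes f g :: "'a::linordered_ab_group_add \<Rightarrow>\<^sub>0 'b::idom"
  assumes "\<forall>x\<in>ks f. m \<le> x" "\<forall>y\<in>ks g. m' \<le> y"
  shows "lk (f * g) (m + m') = lk f m * lk g m'"
proof -
  define f' where "f' = f - sg m (lk f m)"
  define g' where "g' = g - sg m' (lk g m')"
  define sf where "sf = sg m (lk f m)"
  define sgg where "sgg = sg m' (lk g m')"
  have kf: "\<forall>x\<in>ks f'. m < x"
  proof
    fix x assume "x \<in> ks f'"
    then have "x \<in> ks f" "x \<noteq> m" using keys_minus_top[of f m] unfolding f'_def by blast+
    then show "m < x" using assms(1) by (simp add: order_less_le)
  qed
  have kg: "\<forall>x\<in>ks g'. m' < x"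
  proof
    fix x assume "x \<in> ks g'"
    then have "x \<in> ks g" "x \<noteq> m'" using keys_minus_top[of g m'] unfolding g'_def by blast+
    then show "m' < x" using assms(2) by (simp add: order_less_le)
  qed
  have f: "f = sf + f'" and g: "g = sgg + g'"
    unfolding f'_def g'_def sf_def sgg_def by simp_all
  have z1: "lk (sf * g') (m + m') = 0"
  proof -
    have "m + m' \<notin> ks (sf * g')"
    proof
      assume "m + m' \<in> ks (sf * g')"
      then obtain x y where xy: "x \<in> ks sf" "y \<in> ks g'" "m + m' = x + y"
        using keys_mult by blast
      then have "x = m" unfolding sf_def by (simp split: if_splits)
      then have "y = m'" using xy(3) by simp
      then show False using kg xy(2) by auto
    qed
    then show ?thesis by (simp add: in_keys_iff)
  qed
  have z2: "lk (f' * g) (m + m') = 0"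
  proof -
    have "m + m' \<notin> ks (f' * g)"
    proof
      assume "m + m' \<in> ks (f' * g)"
      then obtain x y where xy: "x \<in> ks f'" "y \<in> ks g" "m + m' = x + y"
        using keys_mult by blast
      then have "m < x" "m' \<le> y" using kf assms(2) by auto
      then have "m + m' < x + y" by (rule add_less_le_mono)
      then show False using xy by simp
    qed
    then show ?thesis by (simp add: in_keys_iff)
  qed
  have "f * g = sf * sgg + sf * g' + f' * g"
    using f g by (simp add: algebra_simps)
  then have "lk (f * g) (m + m') = lk f m * lk g m'"
    using z1 z2 by (simp add: lookup_add mult_single sf_def sgg_def)
  then show ?thesis by simp
qed

definition mono_pm :: "('a \<Rightarrow>\<^sub>0 'b::zero) \<Rightarrow> bool" where
  "mono_pm u \<longleftrightarrow> (\<exists>e c. c \<noteq> 0 \<and> u = sg e c)"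

lemma single_keys_eq:
  fixes u :: "'a::linorder \<Rightarrow>\<^sub>0 'b::zero"
  assumes "u \<noteq> 0" "Max (ks u) = Min (ks u)"
  shows "mono_pm u"
proof -
  have fin: "finite (ks u)" "ks u \<noteq> {}" using assms(1) by simp_all
  define e where "e = Max (ks u)"
  have K: "ks u = {e}"
  proof -
    have "x = e" if "x \<in> ks u" for x
    proof -
      have "x \<le> Max (ks u)" using Max_ge[OF fin(1) that] .
      moreover have "Min (ks u) \<le> x" using Min_le[OF fin(1) that] .
      ultimately have "x \<le> e" "e \<le> x" using assms(2) unfolding e_def by simp_all
      then show ?thesis by (rule antisym)
    qed
    moreover have "e \<in> ks u" unfolding e_def using Max_in[OF fin] .
    ultimately show ?thesis by blast
  qed
  have eK: "e \<in> ks u" using K by simp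
  have nz: "lk u e \<noteq> 0" using eK by (simp add: in_keys_iff)
  have "u = sg e (lk u e)"
  proof (rule poly_mapping_eqI)
    fix k show "lk u k = lk (sg e (lk u e)) k"
    proof (cases "k = e")
      case True then show ?thesis by simp
    next
      case False
      then have "k \<notin> ks u" using K by simp
      then have "lk u k = 0" by (simp add: in_keys_iff)
      moreover have "lk (sg e (lk u e)) k = 0" using False by (simp add: lookup_single_not_eq)
      ultimately show ?thesis by simp
    qed
  qed
  then show ?thesis unfolding mono_pm_def using nz by (intro exI[of _ e] exI[of _ "lk u e"]) simp
qed

lemma maxmin_mult:
  fixes f g :: "'a::linordered_ab_group_add \<Rightarrow>\<^sub>0 'b::idom"
  assumes "f \<noteq> 0" "g \<noteq> 0"
  shows "Max (ks f) + Max (ks g) \<in> ks (f * g)"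
        "Min (ks f) + Min (ks g) \<in> ks (f * g)"
proof -
  have ff: "finite (ks f)" "ks f \<noteq> {}" using assms(1) by simp_all
  have gg: "finite (ks g)" "ks g \<noteq> {}" using assms(2) by simp_all
  have m: "Max (ks f) \<in> ks f" "Max (ks g) \<in> ks g" "Min (ks f) \<in> ks f" "Min (ks g) \<in> ks g"
    using Max_in[OF ff] Max_in[OF gg] Min_in[OF ff] Min_in[OF gg] .
  then have nz: "lk f (Max (ks f)) \<noteq> 0" "lk g (Max (ks g)) \<noteq> 0"
     "lk f (Min (ks f)) \<noteq> 0" "lk g (Min (ks g)) \<noteq> 0" unfolding in_keys_iff .
  have "lk (f * g) (Max (ks f) + Max (ks g)) = lk f (Max (ks f)) * lk g (Max (ks g))"
    by (rule lookup_mult_max) (use Max_ge[OF ff(1)] Max_ge[OF gg(1)] in blast)+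
  then show "Max (ks f) + Max (ks g) \<in> ks (f * g)" using nz unfolding in_keys_iff by simp
  have "lk (f * g) (Min (ks f) + Min (ks g)) = lk f (Min (ks f)) * lk g (Min (ks g))"
    by (rule lookup_mult_min) (use Min_le[OF ff(1)] Min_le[OF gg(1)] in blast)+
  then show "Min (ks f) + Min (ks g) \<in> ks (f * g)" using nz unfolding in_keys_iff by simp
qed

lemma min_le_max_keys:
  fixes u :: "'a::linorder \<Rightarrow>\<^sub>0 'b::zero"
  assumes "u \<noteq> 0" shows "Min (ks u) \<le> Max (ks u)"
proof -
  have fin: "finite (ks u)" "ks u \<noteq> {}" using assms by simp_all
  then have "Min (ks u) \<in> ks u" by (rule Min_in)
  then show ?thesis using Max_ge[OF fin(1)] by blast
qed

lemma unit_mono: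
  fixes u :: "'a::linordered_ab_group_add \<Rightarrow>\<^sub>0 'b::idom"
  assumes "u dvd 1" shows "mono_pm u"
proof -
  obtain v where v: "1 = u * v" using assms by (auto elim: dvdE)
  have nz: "u \<noteq> 0" "v \<noteq> 0" using v by auto
  have k1: "ks (u * v) = {0}" using v[symmetric] by simp
  have e1: "Max (ks u) + Max (ks v) = 0" using maxmin_mult(1)[OF nz] k1 by blast
  have e2: "Min (ks u) + Min (ks v) = 0" using maxmin_mult(2)[OF nz] k1 by blast
  have l1: "Min (ks u) \<le> Max (ks u)" and l2: "Min (ks v) \<le> Max (ks v)"
    using nz min_le_max_keys by blast+
  have "Max (ks u) = Min (ks u)"
  proof (rule ccontr)
    assume a: "Max (ks u) \<noteq> Min (ks u)"
    have "Min (ks u) < Max (ks u)" using le_neq_trans[OF l1] a by metis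
    then have "Min (ks u) + Min (ks v) < Max (ks u) + Max (ks v)"
      using l2 by (rule add_less_le_mono)
    then show False using e1 e2 by simp
  qed
  then show ?thesis using single_keys_eq nz by blast
qed

lemma sq_mono:
  fixes u :: "'a::linordered_ab_group_add \<Rightarrow>\<^sub>0 'b::idom"
  assumes "mono_pm (u * u)" shows "mono_pm u"
proof -
  obtain e c where e: "c \<noteq> 0" "u * u = sg e c" using assms unfolding mono_pm_def by blast
  have nz: "u \<noteq> 0"
  proof
    assume "u = 0"
    then have "lk (sg e c) e = 0" using e by simp
    then show False using e by simp
  qed
  have k1: "ks (u * u) = {e}" using e by simp
  have e1: "Max (ks u) + Max (ks u) = e" using maxmin_mult(1)[OF nz nz] k1 by blast
  have e2: "Min (ks u) + Min (ks u) = e" using maxmin_mult(2)[OF nz nz] k1 by blast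
  have l1: "Min (ks u) \<le> Max (ks u)" using nz min_le_max_keys by blast
  have "\<not> Min (ks u) < Max (ks u)"
  proof
    assume m: "Min (ks u) < Max (ks u)"
    have "Min (ks u) + Min (ks u) < Max (ks u) + Max (ks u)"
      using add_strict_mono[OF m m] .
    then show False using e1 e2 by simp
  qed
  then have "Max (ks u) = Min (ks u)" using l1 by (simp add: not_less)
  then show ?thesis using single_keys_eq nz by blast
qed


lemma embL_add: "embL (u + v) = embL u + embL v"
  by (simp add: embL_def embF_def flip: to_ac_add)
lemma embL_mult: "embL (u * v) = embL u * embL v"
  by (simp add: embL_def embF_def flip: to_ac_mult)
lemma embL_diff: "embL (u - v) = embL u - embL v"
  by (simp add: embL_def embF_def flip: to_ac_diff)
lemma embL_0: "embL 0 = 0"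
  by (simp add: embL_def embF_def Zero_fract_def)
lemma embL_1: "embL 1 = 1"
  by (simp add: embL_def embF_def One_fract_def)
lemma embL_eq_iff: "embL u = embL v \<longleftrightarrow> u = v"
  by (simp add: embL_def embF_def eq_fract)
lemma embL_eq_0: "embL u = 0 \<longleftrightarrow> u = 0"
  using embL_eq_iff[of u 0] by (simp only: embL_0)
lemma embL_4: "embL (4::'d::{finite,linorder} laurent) = 4"
proof -
  have "(4::'d::{finite,linorder} laurent) = 1 + 1 + 1 + 1" by simp
  then have "embL (4::'d laurent) = 1 + 1 + 1 + 1" by (simp only: embL_add embL_1)
  then show ?thesis by simp
qed

lemma embC_mult: "embC (a * b) = embC a * embC b"
  unfolding embC_def by (simp add: embL_mult[symmetric] mult_single)
lemma embC_add: "embC (a + b) = embC a + embC b"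
  unfolding embC_def by (simp add: embL_add[symmetric] single_add)
lemma embC_minus: "embC (- a) = - embC a"
  unfolding embC_def embL_def embF_def by (simp add: single_uminus flip: to_ac_minus)
lemma embC_1: "embC 1 = 1"
  unfolding embC_def by (simp add: embL_1)
lemma embC_0: "embC 0 = 0"
  unfolding embC_def by (simp add: embL_0)
lemma embC_eq_iff: "embC a = (embC b :: 'd::{finite,linorder} fbar) \<longleftrightarrow> a = b"
  unfolding embC_def embL_eq_iff
proof
  assume "Poly_Mapping.single (0::'d \<Rightarrow>\<^sub>0 int) a = Poly_Mapping.single 0 b"
  then have "Poly_Mapping.lookup (Poly_Mapping.single (0::'d \<Rightarrow>\<^sub>0 int) a) 0 = Poly_Mapping.lookup (Poly_Mapping.single (0::'d \<Rightarrow>\<^sub>0 int) b) 0"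
    by (rule arg_cong)
  then show "a = b" by (simp only: lookup_single_eq)
qed simp

lemma embL_single: "embL (Poly_Mapping.single e x) = embC x * embL (Poly_Mapping.single e 1)"
  unfolding embC_def embL_mult[symmetric] by (simp add: mult_single)

lemma inF_embL: "inF (embL u)" unfolding inF_def embL_def by simp
lemma inF_embC: "inF (embC u)" unfolding embC_def by (rule inF_embL)
lemma inC_embC: "inC (embC u)" unfolding inC_def by simp
lemma inF_add: assumes "inF x" "inF y" shows "inF (x + y)"
proof -
  obtain a b where "x = embF a" "y = embF b" using assms unfolding inF_def by blast
  then have "x + y = embF (a + b)" by (simp add: embF_def)
  then show ?thesis unfolding inF_def by blast
qed
lemma inF_diff: assumes "inF x" "inF y" shows "inF (x - y)"
proof -
  obtain a b where "x = embF a" "y = embF b" using assms unfolding inF_def by blast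
  then have "x - y = embF (a - b)" by (simp add: embF_def)
  then show ?thesis unfolding inF_def by blast
qed
lemma inF_mult: assumes "inF x" "inF y" shows "inF (x * y)"
proof -
  obtain a b where "x = embF a" "y = embF b" using assms unfolding inF_def by blast
  then have "x * y = embF (a * b)" by (simp add: embF_def)
  then show ?thesis unfolding inF_def by blast
qed
lemma inF_divide: assumes "inF x" "inF y" shows "inF (x / y)"
proof -
  obtain a b where "x = embF a" "y = embF b" using assms unfolding inF_def by blast
  then have "x / y = embF (a / b)" by (simp add: embF_def)
  then show ?thesis unfolding inF_def by blast
qed
lemma inF_minus: assumes "inF x" shows "inF (- x)"
proof -
  obtain a where "x = embF a" using assms unfolding inF_def by blast
  then have "- x = embF (- a)" by (simp add: embF_def)
  then show ?thesis unfolding inF_def by blast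
qed


lemma two_times_eq: "x + x = y + y \<Longrightarrow> (x::'a::linordered_ab_group_add) = y"
proof (rule ccontr)
  assume e: "x + x = y + y" and n: "x \<noteq> y"
  then consider "x < y" | "y < x" by (meson linorder_neqE)
  then show False
  proof cases
    case 1 then have "x + x < y + y" using add_strict_mono by blast
    then show False using e by simp
  next
    case 2 then have "y + y < x + x" using add_strict_mono by blast
    then show False using e by simp
  qed
qed

lemma L1:
  fixes eA eB eC e :: "'a::linordered_ab_group_add" and \<alpha> \<beta> \<gamma> \<delta> :: complex
  assumes nz: "\<beta> \<noteq> 0" "\<gamma> \<noteq> 0" "\<delta> \<noteq> 0"
    and D: "sg eA \<alpha> - sg eB \<beta> - sg eC \<gamma> = sg e \<delta>"
    and sq: "sg e \<delta> * sg e \<delta> = 4 * (sg eB \<beta> * sg eC \<gamma>)"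
  shows "e = eC"
proof (rule ccontr)
  assume ne: "e \<noteq> eC"
  have m1: "sg eB \<beta> * sg eC \<gamma> = sg (eB+eC) (\<beta>*\<gamma>)" by (simp add: mult_single)
  have m2: "sg (0::'a) (4::complex) * sg (eB+eC) (\<beta>*\<gamma>) = sg (eB+eC) (4*(\<beta>*\<gamma>))"
    by (simp only: mult_single add_0_left)
  have m3: "(4::'a \<Rightarrow>\<^sub>0 complex) = sg 0 4" by (rule single_numeral[symmetric])
  have m4: "sg e \<delta> * sg e \<delta> = sg (e+e) (\<delta>*\<delta>)" by (simp add: mult_single)
  have eq: "sg (e+e) (\<delta>*\<delta>) = sg (eB+eC) (4*(\<beta>*\<gamma>))"
    using sq unfolding m4 m1 m3 m2 .
  have ee: "e + e = eB + eC"
  proof (rule ccontr)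
    assume "e + e \<noteq> eB + eC"
    then have "lk (sg (eB+eC) (4*(\<beta>*\<gamma>))) (e+e) = 0" by (simp add: lookup_single_not_eq)
    then have "\<delta> * \<delta> = 0" using arg_cong[OF eq, of "\<lambda>p. lk p (e+e)"] by simp
    then show False using nz by simp
  qed
  have nBC: "eB \<noteq> eC"
  proof
    assume "eB = eC" then have "e + e = eC + eC" using ee by simp
    then show False using two_times_eq ne by blast
  qed
  have nBe: "eB \<noteq> e"
  proof
    assume "eB = e" then have "e + e = e + eC" using ee by simp
    then show False using ne by simp
  qed
  have lD: "lk (sg eA \<alpha>) k - lk (sg eB \<beta>) k - lk (sg eC \<gamma>) k = lk (sg e \<delta>) k" for k
    using arg_cong[OF D, of "\<lambda>p. lk p k"] by (simp add: lookup_minus)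
  have "lk (sg eA \<alpha>) eC - 0 - \<gamma> = 0"
    using lD[of eC] nBC ne by (simp add: lookup_single_not_eq)
  then have eAC: "eA = eC" using nz by (cases "eA = eC") (auto simp: lookup_single_not_eq)
  have "lk (sg eA \<alpha>) eB - \<beta> - 0 = 0"
    using lD[of eB] nBC nBe by (simp add: lookup_single_not_eq)
  then have "eA = eB" using nz by (cases "eA = eB") (auto simp: lookup_single_not_eq)
  then show False using eAC nBC by simp
qed


lemma L2:
  fixes eA eB eC eA' eB' eC' :: "'a::linordered_ab_group_add" and \<alpha> \<beta> \<gamma> \<alpha>' \<beta>' \<gamma>' c :: complex
  assumes nz: "\<alpha> \<noteq> 0" "\<beta> \<noteq> 0" "\<gamma> \<noteq> 0" "\<alpha>' \<noteq> 0" "\<beta>' \<noteq> 0" "\<gamma>' \<noteq> 0" "c \<noteq> 0" "c \<noteq> 1"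
   and H1: "sg 0 c * ((sg eA \<alpha> - sg eB \<beta> - sg eC \<gamma>) * sg eC' \<gamma>') = (sg eA' \<alpha>' - sg eB' \<beta>' - sg eC' \<gamma>') * sg eC \<gamma>"
   and H2: "sg 0 (c*c) * (sg eB \<beta> * sg eC' \<gamma>') = sg eB' \<beta>' * sg eC \<gamma>"
   and nt: "\<not> (eA = eB \<and> \<alpha> = \<beta> \<and> eB = eC \<and> \<beta> = \<gamma>)"
  shows "(eA = eB \<and> \<alpha> \<noteq> \<beta>) \<or> (eA = eC \<and> \<alpha> \<noteq> \<gamma>) \<or> (eB = eC \<and> \<beta> \<noteq> \<gamma>)"
proof (rule ccontr)
  assume ng: "\<not> ?thesis"
  then have g1: "eA = eB \<Longrightarrow> \<alpha> = \<beta>" and g2: "eA = eC \<Longrightarrow> \<alpha> = \<gamma>" and g3: "eB = eC \<Longrightarrow> \<beta> = \<gamma>"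
    by auto
  define E0 where "E0 = eC + eC'"
  define E2 where "E2 = eB + eC'"
  define EA where "EA = eA + eC'"
  define EA' where "EA' = eA' + eC"
  have H2': "sg (eB + eC') (c*c*(\<beta>*\<gamma>')) = sg (eB' + eC) (\<beta>'*\<gamma>)"
    using H2 by (simp add: mult_single)
  have e2: "eB' + eC = E2"
  proof (rule ccontr)
    assume "eB' + eC \<noteq> E2"
    then have "lk (sg (eB' + eC) (\<beta>'*\<gamma>)) (eB + eC') = 0" unfolding E2_def by (simp add: lookup_single_not_eq)
    then have "c*c*(\<beta>*\<gamma>') = 0" using arg_cong[OF H2', of "\<lambda>p. lk p (eB + eC')"] by simp
    then show False using nz by simp
  qed
  have bb: "\<beta>'*\<gamma> = c*c*(\<beta>*\<gamma>')"
    using arg_cong[OF H2', of "\<lambda>p. lk p (eB + eC')"] e2 unfolding E2_def by simp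
  have e0: "eC' + eC = E0" unfolding E0_def by (simp add: add.commute)
  have H1': "sg EA (c*(\<alpha>*\<gamma>')) - sg E2 (c*(\<beta>*\<gamma>')) - sg E0 (c*(\<gamma>*\<gamma>'))
      = sg EA' (\<alpha>'*\<gamma>) - sg E2 (\<beta>'*\<gamma>) - sg E0 (\<gamma>'*\<gamma>)"
    using H1 e2 e0 unfolding EA_def E2_def E0_def EA'_def
    by (simp add: mult_single algebra_simps single_diff)
  have key: "(if EA = k then c*(\<alpha>*\<gamma>') else 0) - (if E2 = k then c*(\<beta>*\<gamma>') else 0)
      - (if E0 = k then c*(\<gamma>*\<gamma>') else 0)
      = (if EA' = k then \<alpha>'*\<gamma> else 0) - (if E2 = k then c*c*(\<beta>*\<gamma>') else 0)
      - (if E0 = k then \<gamma>'*\<gamma> else 0)" for k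
    using arg_cong[OF H1', of "\<lambda>p. lk p k"]
    by (simp add: lookup_minus lookup_single when_def bb split del: if_split)
  have iff1: "eA = eC \<longleftrightarrow> EA = E0" unfolding EA_def E0_def by simp
  have iff2: "eA = eB \<longleftrightarrow> EA = E2" unfolding EA_def E2_def by simp
  have iff3: "eB = eC \<longleftrightarrow> E2 = E0" unfolding E2_def E0_def by simp
  have c1: "c - 1 \<noteq> 0" using nz by simp
  show False
  proof (cases "E2 = E0")
    case True
    then have bg: "\<beta> = \<gamma>" using g3 iff3 by simp
    show False
    proof (cases "EA = E0")
      case True
      then have "eA = eC" "eA = eB" "eB = eC" using iff1 iff2 iff3 \<open>E2 = E0\<close> by simp_all
      then show False using nt g1 g2 g3 by simp
    next
      case False
      have kA: "c*(\<alpha>*\<gamma>') = (if EA' = EA then \<alpha>'*\<gamma> else 0)"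
        using key[of EA] False \<open>E2 = E0\<close> by simp
      have "EA' = EA"
      proof (rule ccontr)
        assume "EA' \<noteq> EA" then have "c*(\<alpha>*\<gamma>') = 0" using kA by simp
        then show False using nz by simp
      qed
      then have "EA' \<noteq> E0" using False by simp
      then have "- c*(\<beta>*\<gamma>') - c*(\<gamma>*\<gamma>') = - c*c*(\<beta>*\<gamma>') - \<gamma>'*\<gamma>"
        using key[of E0] False \<open>E2 = E0\<close> by simp
      then have "(c - 1) * (c - 1) * (\<gamma> * \<gamma>') = 0" using bg by (simp add: algebra_simps)
      then show False using nz c1 by simp
    qed
  next
    case False
    note ne20 = False
    show False
    proof (cases "EA = E0")
      case True
      then have ag: "\<alpha> = \<gamma>" using g2 iff1 by simp
      have "EA \<noteq> E2" using True ne20 by simp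
      have k0: "c*(\<alpha>*\<gamma>') - c*(\<gamma>*\<gamma>') = (if EA' = E0 then \<alpha>'*\<gamma> else 0) - \<gamma>'*\<gamma>"
        using key[of E0] True ne20 by simp
      have "EA' = E0"
      proof (rule ccontr)
        assume "EA' \<noteq> E0" then have "\<gamma>'*\<gamma> = 0" using k0 ag by simp
        then show False using nz by simp
      qed
      then have "EA' \<noteq> E2" using ne20 by simp
      then have "- c*(\<beta>*\<gamma>') = - c*c*(\<beta>*\<gamma>')"
        using key[of E2] \<open>EA \<noteq> E2\<close> ne20 by simp
      then have "c * (c - 1) * (\<beta> * \<gamma>') = 0" by (simp add: algebra_simps)
      then show False using nz c1 by simp
    next
      case False
      note neA0 = False
      show False
      proof (cases "EA = E2")
        case True
        then have ab: "\<alpha> = \<beta>" using g1 iff2 by simp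
        have k2: "c*(\<alpha>*\<gamma>') - c*(\<beta>*\<gamma>') = (if EA' = E2 then \<alpha>'*\<gamma> else 0) - c*c*(\<beta>*\<gamma>')"
          using key[of E2] True ne20 by simp
        have "EA' = E2"
        proof (rule ccontr)
          assume "EA' \<noteq> E2" then have "c*c*(\<beta>*\<gamma>') = 0" using k2 ab by simp
          then show False using nz by simp
        qed
        then have "EA' \<noteq> E0" using ne20 by simp
        then have "- c*(\<gamma>*\<gamma>') = - \<gamma>'*\<gamma>"
          using key[of E0] neA0 ne20 by simp
        then have "(c - 1) * (\<gamma> * \<gamma>') = 0" by (simp add: algebra_simps)
        then show False using nz c1 by simp
      next
        case False
        have kA: "c*(\<alpha>*\<gamma>') = (if EA' = EA then \<alpha>'*\<gamma> else 0)"
          using key[of EA] False neA0 by auto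
        have "EA' = EA"
        proof (rule ccontr)
          assume "EA' \<noteq> EA" then have "c*(\<alpha>*\<gamma>') = 0" using kA by simp
          then show False using nz by simp
        qed
        then have "EA' \<noteq> E0" using neA0 by simp
        then have "- c*(\<gamma>*\<gamma>') = - \<gamma>'*\<gamma>"
          using key[of E0] neA0 ne20 by simp
        then have "(c - 1) * (\<gamma> * \<gamma>') = 0" by (simp add: algebra_simps)
        then show False using nz c1 by simp
      qed
    qed
  qed
qed


lemma pair_alg:
  fixes E \<sigma> rI rT rQa rPb rQb rPa lI lT lQa lPb lQb lPa :: "'a::field"
  assumes E: "E*E = 1" and s: "\<sigma>*\<sigma> = 1"
   and PR: "E*rI*rT = rQa*rPb - \<sigma>*rQb*rPa" and PL: "E*lI*lT = lQa*lPb - \<sigma>*lQb*lPa"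
   and nz: "rQa \<noteq> 0" "rPb \<noteq> 0" "lQa \<noteq> 0" "lPb \<noteq> 0"
  shows "(- \<sigma> * (rPa * rQb) / (rPb * rQa)) * (- \<sigma> * (lPa * lQb) / (lPb * lQa))
           = (lPa*rPa*(lQb*rQb)) / (lPb*rPb*(lQa*rQa))"
    and "(- \<sigma> * (rPa * rQb) / (rPb * rQa)) + (- \<sigma> * (lPa * lQb) / (lPb * lQa))
           = (lI*rI*(lT*rT) - lPa*rPa*(lQb*rQb) - lPb*rPb*(lQa*rQa)) / (lPb*rPb*(lQa*rQa))"
    and "1 + (- \<sigma> * (rPa * rQb) / (rPb * rQa)) = E*rI*rT/(rQa*rPb)"
proof -
  let ?YR = "- \<sigma> * (rPa * rQb) / (rPb * rQa)" and ?YL = "- \<sigma> * (lPa * lQb) / (lPb * lQa)"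
  show p: "?YR * ?YL = (lPa*rPa*(lQb*rQb)) / (lPb*rPb*(lQa*rQa))"
  proof -
    have "?YR * ?YL = (\<sigma>*\<sigma>) * (lPa*rPa*(lQb*rQb)) / (lPb*rPb*(lQa*rQa))"
      using nz by (simp add: field_simps)
    then show ?thesis using s by simp
  qed
  show r1: "1 + ?YR = E*rI*rT/(rQa*rPb)"
    using nz PR by (simp add: field_simps)
  have l1: "1 + ?YL = E*lI*lT/(lQa*lPb)"
    using nz PL by (simp add: field_simps)
  have "?YR + ?YL = (1 + ?YR) * (1 + ?YL) - 1 - ?YR * ?YL" by (simp add: algebra_simps)
  also have "\<dots> = (E*E) * (lI*rI*(lT*rT)) / (lPb*rPb*(lQa*rQa)) - 1 - (lPa*rPa*(lQb*rQb)) / (lPb*rPb*(lQa*rQa))"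
    unfolding r1 l1 p using nz by (simp add: field_simps)
  also have "\<dots> = (lI*rI*(lT*rT) - lPa*rPa*(lQb*rQb) - lPb*rPb*(lQa*rQa)) / (lPb*rPb*(lQa*rQa))"
    unfolding E using nz by (simp add: field_simps)
  finally show "?YR + ?YL = (lI*rI*(lT*rT) - lPa*rPa*(lQb*rQb) - lPb*rPb*(lQa*rQa)) / (lPb*rPb*(lQa*rQa))" .
qed

lemma DeltaL_T:
  assumes L: "L \<in> carrier_mat k n" and J: "J \<subseteq> {0..<n}" "card J = k"
  shows "DeltaL L J = DeltaR (transpose_mat L) J"
proof -
  have c1: "{i. i < n \<and> i \<in> J} = J" using J by auto
  have c2: "{j. j < k \<and> j \<in> UNIV} = {0..<k}" by auto
  have fin: "finite J" using J finite_subset by auto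
  have sub: "submatrix L UNIV J = transpose_mat (submatrix (transpose_mat L) J UNIV)"
  proof (rule eq_matI)
    fix a b assume ab: "a < dim_row (transpose_mat (submatrix (transpose_mat L) J UNIV))"
      "b < dim_col (transpose_mat (submatrix (transpose_mat L) J UNIV))"
    then have a: "a < k" and b: "b < card J" using L J by (auto simp: submatrix_def c1 c2)
    have pb: "pick J b \<in> J" using pick_in_set_le[OF b] .
    then have "pick J b < n" using J by auto
    then show "submatrix L UNIV J $$ (a, b) = transpose_mat (submatrix (transpose_mat L) J UNIV) $$ (a, b)"
      using a b L J by (auto simp: submatrix_def c1 c2 pick_UNIV)
  qed (use L J in \<open>auto simp: submatrix_def c1 c2\<close>)
  have sq: "submatrix (transpose_mat L) J UNIV \<in> carrier_mat k k"
    using L J by (auto simp: submatrix_def c1 c2)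
  show ?thesis unfolding DeltaL_def DeltaR_def sub using det_transpose[OF sq] by simp
qed

lemma ks_swap1:
  assumes I: "I \<in> ksubsets k n" and i: "i \<in> I" and a: "a \<in> {0..<n} - I"
  shows "swap1 I i a \<in> ksubsets k n"
proof -
  have fin: "finite I" using I unfolding ksubsets_def using finite_subset by blast
  show ?thesis using I i a fin unfolding ksubsets_def swap1_def
    by (auto simp: card_Diff_singleton) (metis One_nat_def Suc_pred card_gt_0_iff empty_iff)
qed

lemma ks_swap2:
  assumes I: "I \<in> ksubsets k n" and ij: "i \<in> I" "j \<in> I" "i \<noteq> j"
    and a: "a \<in> {0..<n} - I" and b: "b \<in> {0..<n} - I" and ab: "a \<noteq> b"
  shows "swap2 I i j a b \<in> ksubsets k n"
proof -
  have fin: "finite I" using I unfolding ksubsets_def using finite_subset by blast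
  have c2: "2 \<le> card I" using card_mono[OF fin, of "{i,j}"] ij by simp
  have "card (I - {i, j}) = card I - 2" using ij fin by (simp add: card_Diff_subset)
  then show ?thesis using I ij a b ab fin c2 unfolding ksubsets_def swap2_def by auto
qed

lemma mono_mult:
  fixes u v :: "'a::monoid_add \<Rightarrow>\<^sub>0 complex"
  assumes "mono_pm u" "mono_pm v" shows "mono_pm (u * v)"
proof -
  obtain e c where u: "c \<noteq> 0" "u = sg e c" using assms(1) unfolding mono_pm_def by blast
  obtain e' c' where v: "c' \<noteq> 0" "v = sg e' c'" using assms(2) unfolding mono_pm_def by blast
  have "u * v = sg (e + e') (c * c')" using u v by (simp add: mult_single)
  moreover have "c * c' \<noteq> 0" using u v by simp
  ultimately show ?thesis unfolding mono_pm_def by blast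
qed

lemma eps_sq:
  assumes "x \<noteq> i" "x \<noteq> j"
  shows "(of_int (sgn ((int i - int x) * (int j - int x))) :: 'a::comm_ring_1) * of_int (sgn ((int i - int x) * (int j - int x))) = 1"
  using assms by (auto simp: sgn_mult sgn_if)

lemma sig_split:
  "(of_int (sgn ((int i - int a) * (int i - int b) * (int j - int a) * (int j - int b))) :: 'a::comm_ring_1)
    = of_int (sgn ((int i - int a) * (int j - int a))) * of_int (sgn ((int i - int b) * (int j - int b)))"
  by (simp add: sgn_mult mult_ac)

lemma Yval_ratio:
  fixes M :: "'a::field mat"
  assumes nz: "DeltaR M (swap1 I i a1) \<noteq> 0" "DeltaR M (swap1 I i a2) \<noteq> 0" "DeltaR M (swap1 I i a3) \<noteq> 0"
    "DeltaR M (swap1 I j a1) \<noteq> 0" "DeltaR M (swap1 I j a2) \<noteq> 0" "DeltaR M (swap1 I j a3) \<noteq> 0"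
    and ne: "a2 \<noteq> i" "a2 \<noteq> j"
  shows "Yval M I i j a1 a3 = - (Yval M I i j a1 a2 * Yval M I i j a2 a3)"
proof -
  define e where "e = (\<lambda>x. (of_int (sgn ((int i - int x) * (int j - int x))) :: 'a))"
  have e2: "e a2 * e a2 = 1" unfolding e_def by (rule eps_sq[OF ne])
  have s: "\<And>a b. (of_int (sgn ((int i - int a) * (int i - int b) * (int j - int a) * (int j - int b))) :: 'a) = e a * e b"
    unfolding e_def by (rule sig_split)
  show ?thesis unfolding Yval_def s
  proof -
    let ?p1 = "DeltaR M (swap1 I i a1)" and ?p2 = "DeltaR M (swap1 I i a2)" and ?p3 = "DeltaR M (swap1 I i a3)"
    let ?q1 = "DeltaR M (swap1 I j a1)" and ?q2 = "DeltaR M (swap1 I j a2)" and ?q3 = "DeltaR M (swap1 I j a3)"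
    have "- (- (e a1 * e a2) * (?p1 * ?q2) / (?p2 * ?q1) * (- (e a2 * e a3) * (?p2 * ?q3) / (?p3 * ?q2)))
        = - ((e a2 * e a2) * (e a1 * e a3) * (?p1 * ?q3) / (?p3 * ?q1))"
      using nz by (simp add: field_simps)
    then show "- (e a1 * e a3) * (?p1 * ?q3) / (?p3 * ?q1) =
      - (- (e a1 * e a2) * (?p1 * ?q2) / (?p2 * ?q1) * (- (e a2 * e a3) * (?p2 * ?q3) / (?p3 * ?q2)))"
      using e2 by simp
  qed
qed

lemma prop_lemma:
  fixes \<xi> \<eta> :: complex
  assumes "\<xi> \<noteq> 0" "\<eta> \<noteq> 0" "\<xi> \<noteq> \<eta>"
  shows "propC (embL (sg e \<xi>) :: 'd::{finite,linorder} fbar) (embL (sg e \<eta>)) \<and> embL (sg e \<xi>) \<noteq> (embL (sg e \<eta>) :: 'd fbar)"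
proof
  have "embL (sg e \<xi>) = embC (\<xi> / \<eta>) * (embL (sg e \<eta>) :: 'd fbar)"
    unfolding embL_single[of e \<xi>] embL_single[of e \<eta>]
    using assms by (simp add: embC_mult[symmetric] mult.assoc)
  moreover have "\<xi> / \<eta> \<noteq> 0" using assms by simp
  ultimately show "propC (embL (sg e \<xi>) :: 'd fbar) (embL (sg e \<eta>))"
    unfolding propC_def by blast
  show "embL (sg e \<xi>) \<noteq> (embL (sg e \<eta>) :: 'd fbar)"
    unfolding embL_eq_iff using assms
    by (metis lookup_single_eq)
qed

lemma quad_root_inF:
  fixes y :: "'d::{finite,linorder} fbar"
  assumes "y*y + y + 1 = 0" shows "inF y"
proof -
  define s where "s = complex_of_real (sqrt 3)"
  have s3: "s * s = 3" unfolding s_def by (simp flip: of_real_mult)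
  define w where "w = (-1 + \<i> * s) / 2"
  define w' where "w' = (-1 - \<i> * s) / 2"
  have sw: "w + w' = -1" unfolding w_def w'_def by (simp add: field_simps)
  have pw: "w * w' = 1"
  proof -
    have "w * w' = (1 - (\<i> * \<i>) * (s * s)) / 4" unfolding w_def w'_def by (simp add: field_simps)
    also have "\<dots> = 1" using s3 by simp
    finally show ?thesis .
  qed
  have "(y - embC w) * (y - embC w') = y*y - (embC w + embC w') * y + embC w * embC w'"
    by (simp add: algebra_simps)
  also have "\<dots> = y*y + y + 1" unfolding embC_add[symmetric] embC_mult[symmetric] sw pw
    by (simp add: embC_minus embC_1)
  finally have "(y - embC w) * (y - embC w') = 0" using assms by simp
  then have "y = embC w \<or> y = embC w'" by simp
  then show ?thesis using inF_embC by auto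
qed


lemma sig_sq:
  assumes "a \<noteq> i" "a \<noteq> j" "b \<noteq> i" "b \<noteq> j"
  shows "(of_int (sgn ((int i - int a) * (int i - int b) * (int j - int a) * (int j - int b))) :: 'a::comm_ring_1)
    * of_int (sgn ((int i - int a) * (int i - int b) * (int j - int a) * (int j - int b))) = 1"
proof -
  let ?e = "\<lambda>x. (of_int (sgn ((int i - int x) * (int j - int x))) :: 'a)"
  have "(of_int (sgn ((int i - int a) * (int i - int b) * (int j - int a) * (int j - int b))) :: 'a)
    * of_int (sgn ((int i - int a) * (int i - int b) * (int j - int a) * (int j - int b)))
    = (?e a * ?e a) * (?e b * ?e b)" unfolding sig_split by (simp add: mult_ac)
  also have "\<dots> = 1"
  proof -
    have e1: "?e a * ?e a = 1" by (rule eps_sq) (use assms in auto)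
    have e2: "?e b * ?e b = 1" by (rule eps_sq) (use assms in auto)
    show ?thesis by (simp only: e1 e2 mult_1)
  qed
  finally show ?thesis .
qed

lemma pair_main:
  fixes L R :: "'a::field mat"
  assumes L: "L \<in> carrier_mat k n" and R: "R \<in> carrier_mat n k" and I: "I \<in> ksubsets k n"
   and ij: "i \<in> I" "j \<in> I" "i \<noteq> j" and ab: "a \<in> {0..<n} - I" "b \<in> {0..<n} - I" "a \<noteq> b"
   and nz: "DeltaR R (swap1 I j a) \<noteq> 0" "DeltaR R (swap1 I i b) \<noteq> 0"
     "DeltaL L (swap1 I j a) \<noteq> 0" "DeltaL L (swap1 I i b) \<noteq> 0"
  shows "Yval R I i j a b * Yval (transpose_mat L) I i j a b =
      hfun L R (swap1 I i a) * hfun L R (swap1 I j b) / (hfun L R (swap1 I i b) * hfun L R (swap1 I j a))"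
    and "Yval R I i j a b + Yval (transpose_mat L) I i j a b =
      (hfun L R I * hfun L R (swap2 I i j a b) - hfun L R (swap1 I i a) * hfun L R (swap1 I j b)
        - hfun L R (swap1 I i b) * hfun L R (swap1 I j a)) / (hfun L R (swap1 I i b) * hfun L R (swap1 I j a))"
    and "1 + Yval R I i j a b = (osg i j * osg a b * osg a i * osg b j) * DeltaR R I * DeltaR R (swap2 I i j a b)
       / (DeltaR R (swap1 I j a) * DeltaR R (swap1 I i b))"
proof -
  have Ik: "I \<subseteq> {0..<n}" "card I = k" using I unfolding ksubsets_def by auto
  define LT where "LT = transpose_mat L"
  have LT: "LT \<in> carrier_mat n k" unfolding LT_def using L by simp
  have lT: "DeltaL L Xs = DeltaR LT Xs" if "Xs \<in> ksubsets k n" for Xs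
    unfolding LT_def by (rule DeltaL_T[OF L]) (use that in \<open>auto simp: ksubsets_def\<close>)
  have ks: "swap1 I i a \<in> ksubsets k n" "swap1 I j a \<in> ksubsets k n" "swap1 I i b \<in> ksubsets k n"
    "swap1 I j b \<in> ksubsets k n" "swap2 I i j a b \<in> ksubsets k n"
    using ks_swap1[OF I] ks_swap2[OF I ij] ij ab by auto
  have neq: "a \<noteq> i" "a \<noteq> j" "b \<noteq> i" "b \<noteq> j" using ab ij by auto
  note PR = plucker_sets[OF R Ik ij ab]
  note PL = plucker_sets[OF LT Ik ij ab]
  note hL = lT[OF I] lT[OF ks(1)] lT[OF ks(2)] lT[OF ks(3)] lT[OF ks(4)] lT[OF ks(5)]
  have nz': "DeltaR LT (swap1 I j a) \<noteq> 0" "DeltaR LT (swap1 I i b) \<noteq> 0"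
    using nz hL by auto
  note P = pair_alg[OF E_sq sig_sq[OF neq] PR PL nz(1,2) nz']
  show "Yval R I i j a b * Yval (transpose_mat L) I i j a b =
      hfun L R (swap1 I i a) * hfun L R (swap1 I j b) / (hfun L R (swap1 I i b) * hfun L R (swap1 I j a))"
    using P(1) unfolding Yval_def hfun_def LT_def[symmetric] hL .
  show "Yval R I i j a b + Yval (transpose_mat L) I i j a b =
      (hfun L R I * hfun L R (swap2 I i j a b) - hfun L R (swap1 I i a) * hfun L R (swap1 I j b)
        - hfun L R (swap1 I i b) * hfun L R (swap1 I j a)) / (hfun L R (swap1 I i b) * hfun L R (swap1 I j a))"
    using P(2) unfolding Yval_def hfun_def LT_def[symmetric] hL .
  show "1 + Yval R I i j a b = (osg i j * osg a b * osg a i * osg b j) * DeltaR R I * DeltaR R (swap2 I i j a b)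
       / (DeltaR R (swap1 I j a) * DeltaR R (swap1 I i b))"
    using P(3) unfolding Yval_def .
qed


lemma triple_goal:
  fixes \<alpha> \<beta> \<gamma> :: complex
  assumes d: "(eA = eB \<and> \<alpha> \<noteq> \<beta>) \<or> (eA = eC \<and> \<alpha> \<noteq> \<gamma>) \<or> (eB = eC \<and> \<beta> \<noteq> \<gamma>)"
    and nz: "\<alpha> \<noteq> 0" "\<beta> \<noteq> 0" "\<gamma> \<noteq> 0"
  shows "\<exists>p<3. \<exists>q<3. p \<noteq> q \<and>
     propC ([embL (sg eA \<alpha>), embL (sg eB \<beta>), embL (sg eC \<gamma>)] ! p)
           ([embL (sg eA \<alpha>), embL (sg eB \<beta>), embL (sg eC \<gamma>) :: 'd::{finite,linorder} fbar] ! q) \<and>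
     [embL (sg eA \<alpha>), embL (sg eB \<beta>), embL (sg eC \<gamma>) :: 'd fbar] ! p \<noteq>
     [embL (sg eA \<alpha>), embL (sg eB \<beta>), embL (sg eC \<gamma>)] ! q"
proof -
  consider "eA = eB" "\<alpha> \<noteq> \<beta>" | "eA = eC" "\<alpha> \<noteq> \<gamma>" | "eB = eC" "\<beta> \<noteq> \<gamma>" using d by blast
  then show ?thesis
  proof cases
    case 1
    have "propC (embL (sg eA \<alpha>) :: 'd fbar) (embL (sg eA \<beta>)) \<and> embL (sg eA \<alpha>) \<noteq> (embL (sg eA \<beta>) :: 'd fbar)"
      by (rule prop_lemma) (use nz 1 in auto)
    then show ?thesis using 1 by (intro exI[of _ 0] conjI exI[of _ 1]) auto
  next
    case 2
    have "propC (embL (sg eA \<alpha>) :: 'd fbar) (embL (sg eA \<gamma>)) \<and> embL (sg eA \<alpha>) \<noteq> (embL (sg eA \<gamma>) :: 'd fbar)"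
      by (rule prop_lemma) (use nz 2 in auto)
    then show ?thesis using 2 by (intro exI[of _ 0] conjI exI[of _ 2]) auto
  next
    case 3
    have "propC (embL (sg eB \<beta>) :: 'd fbar) (embL (sg eB \<gamma>)) \<and> embL (sg eB \<beta>) \<noteq> (embL (sg eB \<gamma>) :: 'd fbar)"
      by (rule prop_lemma) (use nz 3 in auto)
    then show ?thesis using 3 by (intro exI[of _ 1] conjI exI[of _ 2]) auto
  qed
qed

lemma lift_L2:
  fixes A B C A' B' C' :: "'d::{finite,linorder} fbar" and c :: complex
  assumes A: "A = embL (sg eA \<alpha>)" "B = embL (sg eB \<beta>)" "C = embL (sg eC \<gamma>)"
    and A': "A' = embL (sg eA' \<alpha>')" "B' = embL (sg eB' \<beta>')" "C' = embL (sg eC' \<gamma>')"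
    and nz: "\<alpha> \<noteq> 0" "\<beta> \<noteq> 0" "\<gamma> \<noteq> 0" "\<alpha>' \<noteq> 0" "\<beta>' \<noteq> 0" "\<gamma>' \<noteq> 0" "c \<noteq> 0" "c \<noteq> 1"
    and H1: "embC c * ((A - B - C) * C') = (A' - B' - C') * C"
    and H2: "embC (c*c) * (B * C') = B' * C"
    and nt: "\<not> (A = B \<and> B = C)"
  shows "(eA = eB \<and> \<alpha> \<noteq> \<beta>) \<or> (eA = eC \<and> \<alpha> \<noteq> \<gamma>) \<or> (eB = eC \<and> \<beta> \<noteq> \<gamma>)"
proof (rule L2[where c = c and eA' = eA' and eB' = eB' and eC' = eC' and \<alpha>' = \<alpha>' and \<beta>' = \<beta>' and \<gamma>' = \<gamma>'])
  show "sg 0 c * ((sg eA \<alpha> - sg eB \<beta> - sg eC \<gamma>) * sg eC' \<gamma>') = (sg eA' \<alpha>' - sg eB' \<beta>' - sg eC' \<gamma>') * sg eC \<gamma>"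
    using H1 unfolding A A' embC_def embL_mult[symmetric] embL_diff[symmetric] embL_eq_iff .
  show "sg 0 (c*c) * (sg eB \<beta> * sg eC' \<gamma>') = sg eB' \<beta>' * sg eC \<gamma>"
    using H2 unfolding A A' embC_def embL_mult[symmetric] embL_diff[symmetric] embL_eq_iff .
  show "\<not> (eA = eB \<and> \<alpha> = \<beta> \<and> eB = eC \<and> \<beta> = \<gamma>)" using nt A by auto
qed (use nz in auto)


theorem mainTheorem11:
  fixes L R :: "'d::{finite,linorder} fbar mat"
    and k n :: nat and I :: "nat set" and i j a1 a2 a3 :: nat
  assumes "1 \<le> k" "k \<le> n"
    and "L \<in> carrier_mat k n" "R \<in> carrier_mat n k"
    and SA1: "\<forall>J \<in> ksubsets k n. DeltaR R J \<noteq> 0"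
    and SA2: "\<forall>J \<in> ksubsets k n. DeltaL L J \<noteq> 0 \<longrightarrow> is_Lunit (hfun L R J)"
    and SA3: "\<forall>c < n. \<exists>r < k. L $$ (r, c) \<noteq> 0"
    and I: "I \<in> ksubsets k n" "DeltaL L I \<noteq> 0"
    and ij: "i \<in> I" "j \<in> I" "i \<noteq> j"
    and alphas: "a1 \<in> {0..<n} - I" "a2 \<in> {0..<n} - I" "a3 \<in> {0..<n} - I"
      "a1 \<noteq> a2" "a1 \<noteq> a3" "a2 \<noteq> a3"
    and rad12: "radical L R I i j a1 a2"
    and rad13: "radical L R I i j a1 a3"
    and F23: "inF (Yval R I i j a2 a3)"
  shows "inC (Yval R I i j a2 a3) \<and>
    (\<forall>w \<in> {a2, a3}. \<exists>p < 3. \<exists>q < 3. p \<noteq> q \<and>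
        propC (htriple L R I i j a1 w ! p) (htriple L R I i j a1 w ! q) \<and>
        htriple L R I i j a1 w ! p \<noteq> htriple L R I i j a1 w ! q)"
proof -
  note Lc = assms(3) and Rc = assms(4)
  define LT where "LT = transpose_mat L"
  have lT: "DeltaL L Xs = DeltaR LT Xs" if "Xs \<in> ksubsets k n" for Xs
    unfolding LT_def by (rule DeltaL_T[OF Lc]) (use that in \<open>auto simp: ksubsets_def\<close>)
  define P where "P a = swap1 I i a" for a
  define Q where "Q a = swap1 I j a" for a
  define T where "T a b = swap2 I i j a b" for a b
  define h where "h Xs = hfun L R Xs" for Xs
  have ksP: "P a \<in> ksubsets k n" "Q a \<in> ksubsets k n" if "a \<in> {0..<n} - I" for a
    unfolding P_def Q_def using ks_swap1[OF I(1)] ij that by auto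
  have ksT: "T a b \<in> ksubsets k n" if "a \<in> {0..<n} - I" "b \<in> {0..<n} - I" "a \<noteq> b" for a b
    unfolding T_def using ks_swap2[OF I(1) ij] that by auto
  note al = alphas
  have rnz: "DeltaR R Xs \<noteq> 0" if "Xs \<in> ksubsets k n" for Xs using SA1 that by blast
  have hlr: "h Xs = DeltaL L Xs * DeltaR R Xs" for Xs unfolding h_def hfun_def ..
  from rad12 have r12: "h I * h (T a1 a2) \<noteq> 0" "h (P a1) * h (Q a2) \<noteq> 0" "h (P a2) * h (Q a1) \<noteq> 0"
      "\<not> inF (Yval R I i j a1 a2)"
    unfolding radical_def h_def P_def Q_def T_def by auto
  from rad13 have r13: "h I * h (T a1 a3) \<noteq> 0" "h (P a1) * h (Q a3) \<noteq> 0" "h (P a3) * h (Q a1) \<noteq> 0"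
      "\<not> inF (Yval R I i j a1 a3)"
    unfolding radical_def h_def P_def Q_def T_def by auto
  have hnz: "h I \<noteq> 0" "h (T a1 a2) \<noteq> 0" "h (T a1 a3) \<noteq> 0" "h (P a1) \<noteq> 0" "h (P a2) \<noteq> 0" "h (P a3) \<noteq> 0"
    "h (Q a1) \<noteq> 0" "h (Q a2) \<noteq> 0" "h (Q a3) \<noteq> 0"
    using r12 r13 by auto
  have lnz: "DeltaL L Xs \<noteq> 0" if "h Xs \<noteq> 0" for Xs using that hlr by auto
  have unitX: "\<exists>u. mono_pm u \<and> h Xs = embL u" if "Xs \<in> ksubsets k n" "h Xs \<noteq> 0" for Xs
  proof -
    have "is_Lunit (h Xs)" using SA2 that lnz unfolding h_def by blast
    then show ?thesis unfolding is_Lunit_def using unit_mono by blast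
  qed
  have unit2: "\<exists>u. mono_pm u \<and> h X1 * h X2 = embL u"
    if xx: "X1 \<in> ksubsets k n" "h X1 \<noteq> 0" "X2 \<in> ksubsets k n" "h X2 \<noteq> 0" for X1 X2
  proof -
    obtain u1 where u1: "mono_pm u1" "h X1 = embL u1" using unitX[OF xx(1,2)] by blast
    obtain u2 where u2: "mono_pm u2" "h X2 = embL u2" using unitX[OF xx(3,4)] by blast
    have "mono_pm (u1 * u2)" by (rule mono_mult[OF u1(1) u2(1)])
    moreover have "h X1 * h X2 = embL (u1 * u2)" using u1 u2 by (simp add: embL_mult)
    ultimately show ?thesis by blast
  qed
  have inFh: "inF (h Xs)" if "Xs \<in> ksubsets k n" "h Xs \<noteq> 0" for Xs
    using unitX[OF that] inF_embL by auto
  have ks: "P a1 \<in> ksubsets k n" "P a2 \<in> ksubsets k n" "P a3 \<in> ksubsets k n"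
    "Q a1 \<in> ksubsets k n" "Q a2 \<in> ksubsets k n" "Q a3 \<in> ksubsets k n"
    "T a1 a2 \<in> ksubsets k n" "T a1 a3 \<in> ksubsets k n" "T a2 a3 \<in> ksubsets k n"
    using ksP al ksT by auto
  note pm12 = pair_main[OF Lc Rc I(1) ij al(1) al(2) al(4),
      folded P_def Q_def T_def h_def LT_def]
  note pm13 = pair_main[OF Lc Rc I(1) ij al(1) al(3) al(5),
      folded P_def Q_def T_def h_def LT_def]
  note pm23 = pair_main[OF Lc Rc I(1) ij al(2) al(3) al(6),
      folded P_def Q_def T_def h_def LT_def]
  have nzR: "DeltaR R (P a1) \<noteq> 0" "DeltaR R (P a2) \<noteq> 0" "DeltaR R (P a3) \<noteq> 0"
     "DeltaR R (Q a1) \<noteq> 0" "DeltaR R (Q a2) \<noteq> 0" "DeltaR R (Q a3) \<noteq> 0"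
     "DeltaR R I \<noteq> 0" "DeltaR R (T a2 a3) \<noteq> 0"
    using rnz ks I(1) by auto
  have nzL: "DeltaL L (P a1) \<noteq> 0" "DeltaL L (P a2) \<noteq> 0" "DeltaL L (P a3) \<noteq> 0"
     "DeltaL L (Q a1) \<noteq> 0" "DeltaL L (Q a2) \<noteq> 0" "DeltaL L (Q a3) \<noteq> 0"
    using lnz hnz by auto
  have nzLT: "DeltaR LT (P a1) \<noteq> 0" "DeltaR LT (P a2) \<noteq> 0" "DeltaR LT (P a3) \<noteq> 0"
     "DeltaR LT (Q a1) \<noteq> 0" "DeltaR LT (Q a2) \<noteq> 0" "DeltaR LT (Q a3) \<noteq> 0"
    using nzL lT ks by auto
  define y where "y = Yval R I i j a1 a2"
  define yL where "yL = Yval LT I i j a1 a2"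
  define y' where "y' = Yval R I i j a1 a3"
  define y'L where "y'L = Yval LT I i j a1 a3"
  define s where "s = Yval R I i j a2 a3"
  define sL where "sL = Yval LT I i j a2 a3"
  define A where "A = h I * h (T a1 a2)"
  define B where "B = h (P a1) * h (Q a2)"
  define C where "C = h (P a2) * h (Q a1)"
  define A' where "A' = h I * h (T a1 a3)"
  define B' where "B' = h (P a1) * h (Q a3)"
  define C' where "C' = h (P a3) * h (Q a1)"
  define A'' where "A'' = h I * h (T a2 a3)"
  define B'' where "B'' = h (P a2) * h (Q a3)"
  define C'' where "C'' = h (P a3) * h (Q a2)"
  have p12: "y * yL = B / C" "y + yL = (A - B - C) / C"
    using pm12(1,2)[OF nzR(4) nzR(2) nzL(4) nzL(2)] unfolding y_def yL_def A_def B_def C_def by auto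
  have p13: "y' * y'L = B' / C'" "y' + y'L = (A' - B' - C') / C'"
    using pm13(1,2)[OF nzR(4) nzR(3) nzL(4) nzL(3)] unfolding y'_def y'L_def A'_def B'_def C'_def by auto
  have p23: "s * sL = B'' / C''" "s + sL = (A'' - B'' - C'') / C''"
    using pm23(1,2)[OF nzR(5) nzR(3) nzL(5) nzL(3)] unfolding s_def sL_def A''_def B''_def C''_def by auto
  have one23: "1 + s = osg i j * osg a2 a3 * osg a2 i * osg a3 j * DeltaR R I * DeltaR R (T a2 a3) /
     (DeltaR R (Q a2) * DeltaR R (P a3))"
    using pm23(3)[OF nzR(5) nzR(3) nzL(5) nzL(3)] unfolding s_def .
  have ne2: "a2 \<noteq> i" "a2 \<noteq> j" using al ij by auto
  have rat: "y' = - (y * s)" unfolding y'_def y_def s_def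
    by (rule Yval_ratio) (use nzR ne2 in \<open>auto simp: P_def Q_def\<close>)
  have ratL: "y'L = - (yL * sL)" unfolding y'L_def yL_def sL_def
    by (rule Yval_ratio) (use nzLT ne2 in \<open>auto simp: P_def Q_def\<close>)
  have Bnz: "B \<noteq> 0" "C \<noteq> 0" "B' \<noteq> 0" "C' \<noteq> 0" "B'' \<noteq> 0" "C'' \<noteq> 0"
    unfolding B_def C_def B'_def C'_def B''_def C''_def using hnz by auto
  have Fh: "inF (h I)" "inF (h (T a1 a2))" "inF (h (T a1 a3))" "inF (h (P a1))" "inF (h (P a2))" "inF (h (P a3))"
     "inF (h (Q a1))" "inF (h (Q a2))" "inF (h (Q a3))"
    using inFh ks I(1) hnz by auto
  have FB: "inF A" "inF B" "inF C" "inF A'" "inF B'" "inF C'" "inF B''" "inF C''"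
    unfolding A_def B_def C_def A'_def B'_def C'_def B''_def C''_def using Fh by (auto intro: inF_mult)
  have Fs: "inF s" using F23 unfolding s_def .
  have snz: "s \<noteq> 0" using p23(1) Bnz by auto
  have sL_eq: "sL = (B'' / C'') / s" using p23(1) snz Bnz by (simp add: field_simps)
  have FsL: "inF sL" unfolding sL_eq by (rule inF_divide[OF inF_divide[OF FB(7) FB(8)] Fs])
  have seq: "s = sL"
  proof (rule ccontr)
    assume ne: "s \<noteq> sL"
    have F12: "inF (y + yL)" unfolding p12(2) by (rule inF_divide[OF inF_diff[OF inF_diff[OF FB(1) FB(2)] FB(3)] FB(3)])
    have F13: "inF (y' + y'L)" unfolding p13(2) by (rule inF_divide[OF inF_diff[OF inF_diff[OF FB(4) FB(5)] FB(6)] FB(6)])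
    have "yL * (s - sL) = s * (y + yL) + (y' + y'L)" unfolding rat ratL by (simp add: algebra_simps)
    then have "yL = (s * (y + yL) + (y' + y'L)) / (s - sL)" using ne by (simp add: field_simps)
    moreover have "inF ((s * (y + yL) + (y' + y'L)) / (s - sL))"
      by (rule inF_divide[OF inF_add[OF inF_mult[OF Fs F12] F13] inF_diff[OF Fs FsL]])
    ultimately have FyL: "inF yL" by simp
    have "y = (y + yL) - yL" by simp
    then have "inF y" using F12 FyL inF_diff by metis
    then show False using r12(4) unfolding y_def by simp
  qed
  have ss: "s * s = B'' / C''" using p23(1) seq by simp
  have s2: "s + s = (A'' - B'' - C'') / C''" using p23(2) seq by simp
  have Enz: "osg i j * osg a2 a3 * osg a2 i * osg a3 j \<noteq> (0 :: 'd fbar)"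
    using E_sq[of i j a2 a3, where 'a = "'d fbar"] by auto
  have one: "1 + s \<noteq> 0" unfolding one23 using Enz nzR by simp
  have sq1: "(1 + s) * (1 + s) = A'' / C''"
  proof -
    have "(1 + s) * (1 + s) = 1 + (s + s) + s * s" by (simp add: algebra_simps)
    also have "\<dots> = A'' / C''" unfolding ss s2 using Bnz by (simp add: field_simps)
    finally show ?thesis .
  qed
  have A''nz: "A'' \<noteq> 0"
  proof
    assume "A'' = 0"
    then have "(1 + s) * (1 + s) = 0" using sq1 by simp
    then show False using one by simp
  qed
  then have hT23: "h I \<noteq> 0" "h (T a2 a3) \<noteq> 0" unfolding A''_def by auto
  obtain uA'' where uA'': "mono_pm uA''" "A'' = embL uA''"
    using unit2[OF I(1) hT23(1) ks(9) hT23(2)] unfolding A''_def by blast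
  obtain uB'' where uB'': "mono_pm uB''" "B'' = embL uB''"
    using unit2[OF ks(2) hnz(5) ks(6) hnz(9)] unfolding B''_def by blast
  obtain uC'' where uC'': "mono_pm uC''" "C'' = embL uC''"
    using unit2[OF ks(3) hnz(6) ks(5) hnz(8)] unfolding C''_def by blast
  have dK: "A'' - B'' - C'' = (s + s) * C''" using s2 Bnz by (simp add: field_simps)
  have sqK: "(A'' - B'' - C'') * (A'' - B'' - C'') = B'' * C'' + B'' * C'' + B'' * C'' + B'' * C''"
  proof -
    have "(A'' - B'' - C'') * (A'' - B'' - C'') = (s * s) * (C'' * C'') + (s * s) * (C'' * C'')
        + (s * s) * (C'' * C'') + (s * s) * (C'' * C'')"
      unfolding dK by (simp add: algebra_simps)
    also have "(s * s) * (C'' * C'') = B'' * C''" unfolding ss using Bnz by (simp add: field_simps)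
    finally show ?thesis .
  qed
  define d where "d = uA'' - uB'' - uC''"
  have dd0: "d * d = uB'' * uC'' + uB'' * uC'' + uB'' * uC'' + uB'' * uC''"
    using sqK unfolding uA'' uB'' uC'' d_def embL_diff[symmetric] embL_mult[symmetric] embL_add[symmetric]
      embL_eq_iff .
  have f4: "(4::'d laurent) = 1 + 1 + 1 + 1" by simp
  have dd: "d * d = 4 * (uB'' * uC'')" unfolding dd0 f4 by (simp add: distrib_right)
  have m4: "mono_pm (4 :: 'd laurent)"
    unfolding mono_pm_def by (rule exI[of _ 0], rule exI[of _ 4]) simp
  have "mono_pm (d * d)" unfolding dd by (rule mono_mult[OF m4 mono_mult[OF uB''(1) uC''(1)]])
  then have md: "mono_pm d" by (rule sq_mono)
  obtain eA2 \<alpha>2 where a2s: "\<alpha>2 \<noteq> 0" "uA'' = sg eA2 \<alpha>2" using uA''(1) unfolding mono_pm_def by blast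
  obtain eB2 \<beta>2 where b2s: "\<beta>2 \<noteq> 0" "uB'' = sg eB2 \<beta>2" using uB''(1) unfolding mono_pm_def by blast
  obtain eC2 \<gamma>2 where c2s: "\<gamma>2 \<noteq> 0" "uC'' = sg eC2 \<gamma>2" using uC''(1) unfolding mono_pm_def by blast
  obtain e \<delta> where ds: "\<delta> \<noteq> 0" "d = sg e \<delta>" using md unfolding mono_pm_def by blast
  have Dq: "sg eA2 \<alpha>2 - sg eB2 \<beta>2 - sg eC2 \<gamma>2 = sg e \<delta>"
    using d_def unfolding ds(2) a2s(2) b2s(2) c2s(2) by (rule sym)
  have Sq: "sg e \<delta> * sg e \<delta> = 4 * (sg eB2 \<beta>2 * sg eC2 \<gamma>2)"
    using dd unfolding ds(2) b2s(2) c2s(2) .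
  have eeq: "e = eC2" by (rule L1[OF b2s(1) c2s(1) ds(1) Dq Sq])
  define Xm where "Xm = (embL (sg eC2 1) :: 'd fbar)"
  have Xmnz: "Xm \<noteq> 0" unfolding Xm_def embL_eq_0
  proof
    assume "sg eC2 (1::complex) = 0"
    then have "lk (sg eC2 (1::complex)) eC2 = lk 0 eC2" by (rule arg_cong)
    then show False by simp
  qed
  have "embL d = A'' - B'' - C''" unfolding d_def uA''(2) uB''(2) uC''(2) embL_diff ..
  then have "(s + s) * C'' = embL d" using dK by simp
  then have "(s + s) * (embC \<gamma>2 * Xm) = embC \<delta> * Xm"
    unfolding uC''(2) c2s(2) ds(2) eeq embL_single[of eC2 \<gamma>2] embL_single[of eC2 \<delta>] Xm_def[symmetric] .
  then have "((s + s) * embC \<gamma>2) * Xm = embC \<delta> * Xm" by (simp only: mult.assoc)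
  then have sgg: "(s + s) * embC \<gamma>2 = embC \<delta>" by (rule mult_right_cancel[OF Xmnz, THEN iffD1])
  have tg: "2 * \<gamma>2 = \<gamma>2 + \<gamma>2" by simp
  have ee: "s * embC (2 * \<gamma>2) = (s + s) * embC \<gamma>2" unfolding tg embC_add by (simp only: distrib_left distrib_right)
  from ee sgg have sg2: "s * embC (2 * \<gamma>2) = embC \<delta>" by (rule trans)
  define cc where "cc = \<delta> / (2 * \<gamma>2)"
  have ccm: "embC cc * embC (2 * \<gamma>2) = (embC \<delta> :: 'd fbar)"
    unfolding embC_mult[symmetric] cc_def using c2s by simp
  have g2nz: "embC (2 * \<gamma>2) \<noteq> (0 :: 'd fbar)"
  proof
    assume "embC (2 * \<gamma>2) = (0 :: 'd fbar)"
    then have "embC (2 * \<gamma>2) = (embC 0 :: 'd fbar)" by (simp only: embC_0)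
    then have "2 * \<gamma>2 = 0" by (simp only: embC_eq_iff)
    then show False using c2s(1) by simp
  qed
  have scc: "s = embC cc"
    using sg2 ccm g2nz by (metis mult_right_cancel)
  have part1: "inC (Yval R I i j a2 a3)" unfolding s_def[symmetric] scc by (rule inC_embC)
  define c where "c = - cc"
  have sc: "s = - embC c" unfolding scc c_def embC_minus by simp
  have cnz: "c \<noteq> 0" using snz sc embC_0 by auto
  have c1: "c \<noteq> 1"
  proof
    assume "c = 1" then have "s = -1" using sc embC_1 by simp
    then show False using one by simp
  qed
  have y'c: "y' = embC c * y" unfolding rat sc by simp
  have y'Lc: "y'L = embC c * yL" unfolding ratL seq[symmetric] sc by simp
  have H1: "embC c * ((A - B - C) * C') = (A' - B' - C') * C"
  proof -
    have "(A' - B' - C') / C' = embC c * ((A - B - C) / C)"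
      unfolding p13(2)[symmetric] p12(2)[symmetric] y'c y'Lc by (simp add: algebra_simps)
    then show ?thesis using Bnz by (simp add: field_simps)
  qed
  have H2: "embC (c * c) * (B * C') = B' * C"
  proof -
    have "B' / C' = embC (c * c) * (B / C)"
      unfolding p13(1)[symmetric] p12(1)[symmetric] y'c y'Lc embC_mult by (simp add: algebra_simps)
    then show ?thesis using Bnz by (simp add: field_simps)
  qed
  have ic: "embC (inverse c) * embC c = (1 :: 'd fbar)"
    unfolding embC_mult[symmetric] using cnz by (simp add: embC_1)
  have H1': "embC (inverse c) * ((A' - B' - C') * C) = (A - B - C) * C'"
  proof -
    have "embC (inverse c) * ((A' - B' - C') * C) = (embC (inverse c) * embC c) * ((A - B - C) * C')"
      unfolding H1[symmetric] by (simp add: mult.assoc)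
    then show ?thesis unfolding ic by simp
  qed
  have ic2: "embC (inverse c * inverse c) * embC (c * c) = (1 :: 'd fbar)"
    unfolding embC_mult[symmetric] using cnz by (simp add: embC_1 field_simps)
  have H2': "embC (inverse c * inverse c) * (B' * C) = B * C'"
  proof -
    have "embC (inverse c * inverse c) * (B' * C) = (embC (inverse c * inverse c) * embC (c * c)) * (B * C')"
      unfolding H2[symmetric] by (simp add: mult.assoc)
    then show ?thesis unfolding ic2 by simp
  qed
  have icnz: "inverse c \<noteq> 0" using cnz by simp
  have ic1: "inverse c \<noteq> 1" using c1 by (metis inverse_1 inverse_inverse_eq)
  have hA: "h I \<noteq> 0" "h (T a1 a2) \<noteq> 0" "h (T a1 a3) \<noteq> 0" using hnz by auto
  obtain uA where uA: "mono_pm uA" "A = embL uA" using unit2[OF I(1) hA(1) ks(7) hA(2)] unfolding A_def by blast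
  obtain uB where uB: "mono_pm uB" "B = embL uB" using unit2[OF ks(1) hnz(4) ks(5) hnz(8)] unfolding B_def by blast
  obtain uC where uC: "mono_pm uC" "C = embL uC" using unit2[OF ks(2) hnz(5) ks(4) hnz(7)] unfolding C_def by blast
  obtain uA' where uA': "mono_pm uA'" "A' = embL uA'" using unit2[OF I(1) hA(1) ks(8) hA(3)] unfolding A'_def by blast
  obtain uB' where uB': "mono_pm uB'" "B' = embL uB'" using unit2[OF ks(1) hnz(4) ks(6) hnz(9)] unfolding B'_def by blast
  obtain uC' where uC': "mono_pm uC'" "C' = embL uC'" using unit2[OF ks(3) hnz(6) ks(4) hnz(7)] unfolding C'_def by blast
  obtain eA \<alpha> where sA: "\<alpha> \<noteq> 0" "uA = sg eA \<alpha>" using uA(1) unfolding mono_pm_def by blast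
  obtain eB \<beta> where sB: "\<beta> \<noteq> 0" "uB = sg eB \<beta>" using uB(1) unfolding mono_pm_def by blast
  obtain eC \<gamma> where sC: "\<gamma> \<noteq> 0" "uC = sg eC \<gamma>" using uC(1) unfolding mono_pm_def by blast
  obtain eA' \<alpha>' where sA': "\<alpha>' \<noteq> 0" "uA' = sg eA' \<alpha>'" using uA'(1) unfolding mono_pm_def by blast
  obtain eB' \<beta>' where sB': "\<beta>' \<noteq> 0" "uB' = sg eB' \<beta>'" using uB'(1) unfolding mono_pm_def by blast
  obtain eC' \<gamma>' where sC': "\<gamma>' \<noteq> 0" "uC' = sg eC' \<gamma>'" using uC'(1) unfolding mono_pm_def by blast
  have EA: "A = embL (sg eA \<alpha>)" "B = embL (sg eB \<beta>)" "C = embL (sg eC \<gamma>)"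
    using uA uB uC sA sB sC by simp_all
  have EA': "A' = embL (sg eA' \<alpha>')" "B' = embL (sg eB' \<beta>')" "C' = embL (sg eC' \<gamma>')"
    using uA' uB' uC' sA' sB' sC' by simp_all
  have nt: "\<not> (A = B \<and> B = C)"
  proof
    assume e: "A = B \<and> B = C"
    have s1: "y + yL = -1" using p12(2) e Bnz by simp
    have s2: "y * yL = 1" using p12(1) e Bnz by simp
    have yLe: "yL = -1 - y" using s1 by (simp add: algebra_simps)
    have "y * y + y + 1 = 1 - y * yL" unfolding yLe by (simp add: algebra_simps)
    also have "\<dots> = 0" using s2 by simp
    finally have "y * y + y + 1 = 0" .
    then have "inF y" by (rule quad_root_inF)
    then show False using r12(4) unfolding y_def by simp
  qed
  have nt': "\<not> (A' = B' \<and> B' = C')"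
  proof
    assume e: "A' = B' \<and> B' = C'"
    have s1: "y' + y'L = -1" using p13(2) e Bnz by simp
    have s2: "y' * y'L = 1" using p13(1) e Bnz by simp
    have yLe: "y'L = -1 - y'" using s1 by (simp add: algebra_simps)
    have "y' * y' + y' + 1 = 1 - y' * y'L" unfolding yLe by (simp add: algebra_simps)
    also have "\<dots> = 0" using s2 by simp
    finally have "y' * y' + y' + 1 = 0" .
    then have "inF y'" by (rule quad_root_inF)
    then show False using r13(4) unfolding y'_def by simp
  qed
  have D1: "(eA = eB \<and> \<alpha> \<noteq> \<beta>) \<or> (eA = eC \<and> \<alpha> \<noteq> \<gamma>) \<or> (eB = eC \<and> \<beta> \<noteq> \<gamma>)"
    by (rule lift_L2[OF EA EA' sA(1) sB(1) sC(1) sA'(1) sB'(1) sC'(1) cnz c1 H1 H2 nt])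
  have D2: "(eA' = eB' \<and> \<alpha>' \<noteq> \<beta>') \<or> (eA' = eC' \<and> \<alpha>' \<noteq> \<gamma>') \<or> (eB' = eC' \<and> \<beta>' \<noteq> \<gamma>')"
    by (rule lift_L2[OF EA' EA sA'(1) sB'(1) sC'(1) sA(1) sB(1) sC(1) icnz ic1 H1' H2' nt'])
  have ht2: "htriple L R I i j a1 a2 = [embL (sg eA \<alpha>), embL (sg eB \<beta>), embL (sg eC \<gamma>)]"
    unfolding htriple_def h_def[symmetric] P_def[symmetric] Q_def[symmetric] T_def[symmetric]
    using EA unfolding A_def B_def C_def by simp
  have ht3: "htriple L R I i j a1 a3 = [embL (sg eA' \<alpha>'), embL (sg eB' \<beta>'), embL (sg eC' \<gamma>')]"
    unfolding htriple_def h_def[symmetric] P_def[symmetric] Q_def[symmetric] T_def[symmetric]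
    using EA' unfolding A'_def B'_def C'_def by simp
  have G2: "\<exists>p<3. \<exists>q<3. p \<noteq> q \<and>
        propC (htriple L R I i j a1 a2 ! p) (htriple L R I i j a1 a2 ! q) \<and>
        htriple L R I i j a1 a2 ! p \<noteq> htriple L R I i j a1 a2 ! q"
    unfolding ht2 by (rule triple_goal[OF D1 sA(1) sB(1) sC(1)])
  have G3: "\<exists>p<3. \<exists>q<3. p \<noteq> q \<and>
        propC (htriple L R I i j a1 a3 ! p) (htriple L R I i j a1 a3 ! q) \<and>
        htriple L R I i j a1 a3 ! p \<noteq> htriple L R I i j a1 a3 ! q"
    unfolding ht3 by (rule triple_goal[OF D2 sA'(1) sB'(1) sC'(1)])
  show ?thesis using part1 G2 G3 by blast
qed


end
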